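(* There is an absolute constant $C$ such that for every Boolean function $f:\{0,1\}^n\times\{0,1\}^n\to\{0,1\}$, $$Q^{ent}(f)\ge \tfrac14\log_2\!\big(1/\gamma(f)\big)-C.$$
   Context: $Q^{ent}(f)$ is the minimal number of qubits communicated in an arbitrary (multi-round) two-party quantum protocol between Alice (holding $x$) and Bob (holding $y$) that computes $f(x,y)$ with error probability at most $1/3$ on every input, where the parties may share an arbitrary prior entangled state of unlimited size not counted in the cost. An assignment of real unit vectors $\alpha_x,\beta_y$ (any dimension) is a realization of $f$ with margin $\gamma>0$ if $\langle\alpha_x,\beta_y\rangle\ge\gamma$ whenever $f(x,y)=0$ and $\langle\alpha_x,\beta_y\rangle\le-\gamma$ whenever $f(x,y)=1$; $\gamma(f)$ denotes the supremum of margins over all realizations of $f$. *)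

theory Defs
  imports "HOL-Analysis.Analysis"
begin

text \<open>Quantum systems of N qubits: the state space is C^(2^N); basis index a < 2^N,
  qubit i corresponds to bit i of a. Operators are (2^N)x(2^N) complex matrices,
  represented as functions nat => nat => complex (entries with indices < 2^N are relevant).\<close>

definition apply_op :: "nat \<Rightarrow> (nat \<Rightarrow> nat \<Rightarrow> complex) \<Rightarrow> (nat \<Rightarrow> complex) \<Rightarrow> (nat \<Rightarrow> complex)" where
  "apply_op D M v = (\<lambda>a. \<Sum>b<D. M a b * v b)"

definition sqnorm :: "nat \<Rightarrow> (nat \<Rightarrow> complex) \<Rightarrow> real" where
  "sqnorm D v = (\<Sum>a<D. (cmod (v a))\<^sup>2)"

definition is_unitary :: "nat \<Rightarrow> (nat \<Rightarrow> nat \<Rightarrow> complex) \<Rightarrow> bool" where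
  "is_unitary D M \<longleftrightarrow>
     (\<forall>a<D. \<forall>c<D. (\<Sum>b<D. M a b * cnj (M c b)) = (if a = c then 1 else 0))"

definition is_projector :: "nat \<Rightarrow> (nat \<Rightarrow> nat \<Rightarrow> complex) \<Rightarrow> bool" where
  "is_projector D P \<longleftrightarrow>
     (\<forall>a<D. \<forall>b<D. P a b = cnj (P b a)) \<and>
     (\<forall>a<D. \<forall>c<D. (\<Sum>b<D. P a b * P b c) = P a c)"

text \<open>An operator on N qubits acting only on the qubits in S, i.e. of the form u \<otimes> Id.\<close>
definition local_op :: "nat \<Rightarrow> nat set \<Rightarrow> (nat \<Rightarrow> nat \<Rightarrow> complex) \<Rightarrow> bool" where
  "local_op N S M \<longleftrightarrow>
     (\<exists>u :: (nat \<Rightarrow> bool) \<Rightarrow> (nat \<Rightarrow> bool) \<Rightarrow> complex.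
        \<forall>a<2^N. \<forall>b<2^N. M a b =
          (if (\<forall>i<N. i \<notin> S \<longrightarrow> (bit a i \<longleftrightarrow> bit b i))
           then u (\<lambda>i. i \<in> S \<and> bit a i) (\<lambda>i. i \<in> S \<and> bit b i) else 0))"

text \<open>Alice's qubits after j rounds; s j = True means Alice speaks in round j,
  T j is the set of qubits sent in round j.\<close>
fun alice_qubits :: "nat set \<Rightarrow> (nat \<Rightarrow> bool) \<Rightarrow> (nat \<Rightarrow> nat set) \<Rightarrow> nat \<Rightarrow> nat set" where
  "alice_qubits A0 s T 0 = A0"
| "alice_qubits A0 s T (Suc j) =
     (if s j then alice_qubits A0 s T j - T j else alice_qubits A0 s T j \<union> T j)"

fun run_state :: "nat \<Rightarrow> (nat \<Rightarrow> complex) \<Rightarrow> (nat \<Rightarrow> nat \<Rightarrow> nat \<Rightarrow> complex) \<Rightarrow> nat \<Rightarrow> (nat \<Rightarrow> complex)" where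
  "run_state D \<psi> U 0 = \<psi>"
| "run_state D \<psi> U (Suc j) = apply_op D (U j) (run_state D \<psi> U j)"

text \<open>A k-round entanglement-assisted quantum protocol on N qubits computing f on X \<times> Y
  with error at most 1/3, communicating c qubits. \<psi>: arbitrary prior (entangled) state,
  A0: Alice's initial qubits (the rest are Bob's). In round j the speaker applies a unitary
  (depending on its own input) to its own qubits and then sends the qubits T j.
  At the end party p (True = Alice) performs a two-outcome projective measurement on its
  own qubits; outcome "projector" means output 1 (= True).\<close>
definition qprotocol ::
  "'a set \<Rightarrow> 'b set \<Rightarrow> ('a \<Rightarrow> 'b \<Rightarrow> bool) \<Rightarrow> nat \<Rightarrow> nat \<Rightarrow> (nat \<Rightarrow> complex) \<Rightarrow> nat set
   \<Rightarrow> (nat \<Rightarrow> bool) \<Rightarrow> (nat \<Rightarrow> nat set)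
   \<Rightarrow> (nat \<Rightarrow> 'a \<Rightarrow> nat \<Rightarrow> nat \<Rightarrow> complex) \<Rightarrow> (nat \<Rightarrow> 'b \<Rightarrow> nat \<Rightarrow> nat \<Rightarrow> complex)
   \<Rightarrow> bool \<Rightarrow> ('a \<Rightarrow> nat \<Rightarrow> nat \<Rightarrow> complex) \<Rightarrow> ('b \<Rightarrow> nat \<Rightarrow> nat \<Rightarrow> complex) \<Rightarrow> bool" where
  "qprotocol X Y f N k \<psi> A0 s T UA UB p PA PB \<longleftrightarrow>
     (let D = 2^N; Al = alice_qubits A0 s T in
       A0 \<subseteq> {..<N} \<and> sqnorm D \<psi> = 1 \<and>
       (\<forall>j<k. if s j
          then T j \<subseteq> Al j \<and> (\<forall>x\<in>X. is_unitary D (UA j x) \<and> local_op N (Al j) (UA j x))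
          else T j \<subseteq> {..<N} - Al j \<and>
               (\<forall>y\<in>Y. is_unitary D (UB j y) \<and> local_op N ({..<N} - Al j) (UB j y))) \<and>
       (if p then (\<forall>x\<in>X. is_projector D (PA x) \<and> local_op N (Al k) (PA x))
        else (\<forall>y\<in>Y. is_projector D (PB y) \<and> local_op N ({..<N} - Al k) (PB y))) \<and>
       (\<forall>x\<in>X. \<forall>y\<in>Y.
          (let v = run_state D \<psi> (\<lambda>j. if s j then UA j x else UB j y) k;
               pr = sqnorm D (apply_op D (if p then PA x else PB y) v)
           in (f x y \<longrightarrow> pr \<ge> 2/3) \<and> (\<not> f x y \<longrightarrow> pr \<le> 1/3))))"

definition qprotocol_cost :: "nat \<Rightarrow> (nat \<Rightarrow> nat set) \<Rightarrow> nat" where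
  "qprotocol_cost k T = (\<Sum>j<k. card (T j))"

definition Qent :: "'a set \<Rightarrow> 'b set \<Rightarrow> ('a \<Rightarrow> 'b \<Rightarrow> bool) \<Rightarrow> nat" where
  "Qent X Y f = (LEAST c. \<exists>N k \<psi> A0 s T UA UB p PA PB.
      qprotocol X Y f N k \<psi> A0 s T UA UB p PA PB \<and> qprotocol_cost k T = c)"

text \<open>Realization of f with margin g by real unit vectors in R^d (f x y = True means value 1).\<close>
definition realizes_with_margin :: "'a set \<Rightarrow> 'b set \<Rightarrow> ('a \<Rightarrow> 'b \<Rightarrow> bool) \<Rightarrow> real \<Rightarrow> bool" where
  "realizes_with_margin X Y f g \<longleftrightarrow> g > 0 \<and>
     (\<exists>(d::nat) (\<alpha>::'a \<Rightarrow> nat \<Rightarrow> real) (\<beta>::'b \<Rightarrow> nat \<Rightarrow> real).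
        (\<forall>x\<in>X. (\<Sum>i<d. (\<alpha> x i)\<^sup>2) = 1) \<and> (\<forall>y\<in>Y. (\<Sum>i<d. (\<beta> y i)\<^sup>2) = 1) \<and>
        (\<forall>x\<in>X. \<forall>y\<in>Y.
           (\<not> f x y \<longrightarrow> (\<Sum>i<d. \<alpha> x i * \<beta> y i) \<ge> g) \<and>
           (f x y \<longrightarrow> (\<Sum>i<d. \<alpha> x i * \<beta> y i) \<le> - g)))"

definition margin_gamma :: "'a set \<Rightarrow> 'b set \<Rightarrow> ('a \<Rightarrow> 'b \<Rightarrow> bool) \<Rightarrow> real" where
  "margin_gamma X Y f = Sup {g. realizes_with_margin X Y f g}"

end

theory Submission
  imports Defs
begin

lemma sum_single:
  assumes "finite S" "a \<in> S" "\<And>b. b \<in> S \<Longrightarrow> b \<noteq> a \<Longrightarrow> g b = 0"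
  shows "sum g S = g a"
proof -
  have "sum g S = g a + sum g (S - {a})" using assms by (simp add: sum.remove)
  moreover have "sum g (S - {a}) = 0" using assms by (intro sum.neutral) auto
  ultimately show ?thesis by simp
qed

lemma sum_Pow_split:
  assumes "finite W" "T \<subseteq> W"
  shows "(\<Sum>B\<in>Pow W. g B) = (\<Sum>\<tau>\<in>Pow T. \<Sum>B0\<in>Pow (W - T). g (B0 \<union> \<tau>))"
proof -
  have bij: "bij_betw (\<lambda>(B0,\<tau>). B0 \<union> \<tau>) (Pow (W - T) \<times> Pow T) (Pow W)"
  proof (rule bij_betwI')
    fix x y assume "x \<in> Pow (W - T) \<times> Pow T" "y \<in> Pow (W - T) \<times> Pow T"
    then show "((case x of (B0, \<tau>) \<Rightarrow> B0 \<union> \<tau>) = (case y of (B0, \<tau>) \<Rightarrow> B0 \<union> \<tau>)) = (x = y)"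
    proof (cases x; cases y)
      fix a b c d assume xy: "x \<in> Pow (W - T) \<times> Pow T" "y \<in> Pow (W - T) \<times> Pow T" "x = (a, b)" "y = (c, d)"
      then have "a = (a \<union> b) - T" "b = (a \<union> b) \<inter> T" "c = (c \<union> d) - T" "d = (c \<union> d) \<inter> T" by auto
      then show ?thesis using xy by (metis case_prod_conv)
    qed
  next
    fix x assume "x \<in> Pow (W - T) \<times> Pow T" then show "(case x of (B0, \<tau>) \<Rightarrow> B0 \<union> \<tau>) \<in> Pow W"
      using assms by (cases x) auto
  next
    fix y assume "y \<in> Pow W" then show "\<exists>x\<in>Pow (W - T) \<times> Pow T. y = (case x of (B0, \<tau>) \<Rightarrow> B0 \<union> \<tau>)"
      by (intro bexI[of _ "(y - T, y \<inter> T)"]) auto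
  qed
  have "(\<Sum>B\<in>Pow W. g B) = (\<Sum>x\<in>Pow (W - T) \<times> Pow T. g (case x of (B0, \<tau>) \<Rightarrow> B0 \<union> \<tau>))"
    by (rule sum.reindex_bij_betw[OF bij, symmetric])
  also have "\<dots> = (\<Sum>B0\<in>Pow (W - T). \<Sum>\<tau>\<in>Pow T. g (B0 \<union> \<tau>))"
    by (simp add: sum.cartesian_product split_beta)
  also have "\<dots> = (\<Sum>\<tau>\<in>Pow T. \<Sum>B0\<in>Pow (W - T). g (B0 \<union> \<tau>))"
    by (rule sum.swap)
  finally show ?thesis .
qed

lemma sum_Pow_fix:
  assumes "finite W" "T \<subseteq> W" "\<sigma> \<subseteq> T"
  shows "(\<Sum>B\<in>Pow W. if B \<inter> T = \<sigma> then h B else 0) = (\<Sum>B0\<in>Pow (W - T). h (B0 \<union> \<sigma>))"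
proof -
  have "(\<Sum>B\<in>Pow W. if B \<inter> T = \<sigma> then h B else 0)
     = (\<Sum>\<tau>\<in>Pow T. \<Sum>B0\<in>Pow (W - T). if (B0 \<union> \<tau>) \<inter> T = \<sigma> then h (B0 \<union> \<tau>) else 0)"
    by (rule sum_Pow_split[OF assms(1,2)])
  also have "\<dots> = (\<Sum>\<tau>\<in>Pow T. if \<tau> = \<sigma> then (\<Sum>B0\<in>Pow (W - T). h (B0 \<union> \<tau>)) else 0)"
  proof (rule sum.cong[OF refl])
    fix \<tau> assume "\<tau> \<in> Pow T"
    then have "\<And>B0. B0 \<in> Pow (W - T) \<Longrightarrow> (B0 \<union> \<tau>) \<inter> T = \<tau>" by auto
    then show "(\<Sum>B0\<in>Pow (W - T). if (B0 \<union> \<tau>) \<inter> T = \<sigma> then h (B0 \<union> \<tau>) else 0)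
        = (if \<tau> = \<sigma> then (\<Sum>B0\<in>Pow (W - T). h (B0 \<union> \<tau>)) else 0)"
      by (auto intro: sum.cong)
  qed
  also have "\<dots> = (\<Sum>B0\<in>Pow (W - T). h (B0 \<union> \<sigma>))"
    using assms by (simp add: finite_subset)
  finally show ?thesis .
qed

lemma sum_Pow_sub_le:
  fixes h :: "nat set \<Rightarrow> real"
  assumes "finite W" "T \<subseteq> W" "\<sigma> \<subseteq> T" "\<And>B. h B \<ge> 0"
  shows "(\<Sum>B0\<in>Pow (W - T). h (B0 \<union> \<sigma>)) \<le> (\<Sum>B\<in>Pow W. h B)"
proof -
  have "(\<Sum>B0\<in>Pow (W - T). h (B0 \<union> \<sigma>)) \<le> (\<Sum>\<tau>\<in>Pow T. \<Sum>B0\<in>Pow (W - T). h (B0 \<union> \<tau>))"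
    using assms by (intro member_le_sum[where f = "\<lambda>\<tau>. \<Sum>B0\<in>Pow (W - T). h (B0 \<union> \<tau>)"])
      (auto intro: sum_nonneg finite_subset)
  then show ?thesis using sum_Pow_split[OF assms(1,2), where g=h] by simp
qed

definition mv :: "nat set \<Rightarrow> (nat set \<Rightarrow> nat set \<Rightarrow> complex) \<Rightarrow> (nat set \<Rightarrow> complex) \<Rightarrow> nat set \<Rightarrow> complex" where
  "mv W K V = (\<lambda>A. if A \<subseteq> W then \<Sum>B\<in>Pow W. K A B * V B else 0)"
definition mm :: "nat set \<Rightarrow> (nat set \<Rightarrow> nat set \<Rightarrow> complex) \<Rightarrow> (nat set \<Rightarrow> nat set \<Rightarrow> complex) \<Rightarrow> nat set \<Rightarrow> nat set \<Rightarrow> complex" where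
  "mm W K L = (\<lambda>A C. \<Sum>B\<in>Pow W. K A B * L B C)"
definition adj :: "(nat set \<Rightarrow> nat set \<Rightarrow> complex) \<Rightarrow> nat set \<Rightarrow> nat set \<Rightarrow> complex" where
  "adj K = (\<lambda>A B. cnj (K B A))"
definition ip :: "nat set \<Rightarrow> (nat set \<Rightarrow> complex) \<Rightarrow> (nat set \<Rightarrow> complex) \<Rightarrow> complex" where
  "ip W V V' = (\<Sum>A\<in>Pow W. cnj (V A) * V' A)"
definition nrm2 :: "nat set \<Rightarrow> (nat set \<Rightarrow> complex) \<Rightarrow> real" where
  "nrm2 W V = (\<Sum>A\<in>Pow W. (cmod (V A))\<^sup>2)"
definition contr :: "nat set \<Rightarrow> (nat set \<Rightarrow> nat set \<Rightarrow> complex) \<Rightarrow> bool" where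
  "contr W K \<longleftrightarrow> (\<forall>V. nrm2 W (mv W K V) \<le> nrm2 W V)"
definition loc :: "nat set \<Rightarrow> nat set \<Rightarrow> (nat set \<Rightarrow> nat set \<Rightarrow> complex) \<Rightarrow> bool" where
  "loc W S K \<longleftrightarrow> (\<exists>u. \<forall>A B. A \<subseteq> W \<longrightarrow> B \<subseteq> W \<longrightarrow> K A B = (if A - S = B - S then u (A \<inter> S) (B \<inter> S) else 0))"
definition idm :: "nat set \<Rightarrow> nat set \<Rightarrow> complex" where
  "idm = (\<lambda>A B. if A = B then 1 else 0)"
definition Emat :: "nat set \<Rightarrow> nat set \<Rightarrow> nat set \<Rightarrow> nat set \<Rightarrow> nat set \<Rightarrow> complex" where
  "Emat T \<sigma> \<tau> = (\<lambda>A B. if A - T = B - T \<and> A \<inter> T = \<sigma> \<and> B \<inter> T = \<tau> then 1 else 0)"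
definition Cmat :: "nat set \<Rightarrow> nat set \<Rightarrow> nat set \<Rightarrow> (nat set \<Rightarrow> nat set \<Rightarrow> complex) \<Rightarrow> nat set \<Rightarrow> nat set \<Rightarrow> complex" where
  "Cmat T \<sigma> \<tau> K = (\<lambda>A B. if A \<inter> T = B \<inter> T then K ((A - T) \<union> \<sigma>) ((B - T) \<union> \<tau>) else 0)"

lemma adj_adj[simp]: "adj (adj K) = K" by (simp add: adj_def)

lemma mv_out[simp]: "\<not> A \<subseteq> W \<Longrightarrow> mv W K V A = 0" by (simp add: mv_def)

lemma mv_mm: "finite W \<Longrightarrow> mv W (mm W K L) V = mv W K (mv W L V)"
proof (rule ext)
  fix A assume fW: "finite W"
  show "mv W (mm W K L) V A = mv W K (mv W L V) A"
  proof (cases "A \<subseteq> W")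
    case True
    have "mv W K (mv W L V) A = (\<Sum>B\<in>Pow W. K A B * (\<Sum>C\<in>Pow W. L B C * V C))"
      using True by (auto simp: mv_def intro!: sum.cong)
    also have "\<dots> = (\<Sum>B\<in>Pow W. \<Sum>C\<in>Pow W. K A B * L B C * V C)"
      by (simp add: sum_distrib_left mult.assoc)
    also have "\<dots> = (\<Sum>C\<in>Pow W. \<Sum>B\<in>Pow W. K A B * L B C * V C)" by (rule sum.swap)
    also have "\<dots> = mv W (mm W K L) V A"
      using True by (simp add: mv_def mm_def sum_distrib_right)
    finally show ?thesis by simp
  qed simp
qed

lemma mv_cong: "(\<And>A B. A \<subseteq> W \<Longrightarrow> B \<subseteq> W \<Longrightarrow> K A B = K' A B) \<Longrightarrow> (\<And>B. B \<subseteq> W \<Longrightarrow> V B = V' B) \<Longrightarrow> mv W K V = mv W K' V'"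
  by (auto simp: mv_def intro!: ext sum.cong)

lemma ip_cong: "(\<And>B. B \<subseteq> W \<Longrightarrow> V B = V' B) \<Longrightarrow> (\<And>B. B \<subseteq> W \<Longrightarrow> U B = U' B) \<Longrightarrow> ip W V U = ip W V' U'"
  by (auto simp: ip_def intro!: sum.cong)

lemma nrm2_cong: "(\<And>B. B \<subseteq> W \<Longrightarrow> V B = V' B) \<Longrightarrow> nrm2 W V = nrm2 W V'"
  by (auto simp: nrm2_def intro!: sum.cong)

lemma nrm2_nonneg: "nrm2 W V \<ge> 0" by (simp add: nrm2_def sum_nonneg)

lemma ip_adj:
  assumes "finite W"
  shows "ip W (mv W K V) V' = ip W V (mv W (adj K) V')"
proof -
  have "ip W (mv W K V) V' = (\<Sum>A\<in>Pow W. cnj (\<Sum>B\<in>Pow W. K A B * V B) * V' A)"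
    by (auto simp: ip_def mv_def intro!: sum.cong)
  also have "\<dots> = (\<Sum>A\<in>Pow W. \<Sum>B\<in>Pow W. cnj (K A B) * cnj (V B) * V' A)"
    by (simp add: sum_distrib_right)
  also have "\<dots> = (\<Sum>B\<in>Pow W. \<Sum>A\<in>Pow W. cnj (K A B) * cnj (V B) * V' A)" by (rule sum.swap)
  also have "\<dots> = (\<Sum>B\<in>Pow W. cnj (V B) * (\<Sum>A\<in>Pow W. adj K B A * V' A))"
    by (simp add: sum_distrib_left adj_def mult.commute mult.left_commute)
  also have "\<dots> = ip W V (mv W (adj K) V')"
    by (auto simp: ip_def mv_def intro!: sum.cong)
  finally show ?thesis .
qed

lemma nrm2_ip: "nrm2 W V = Re (ip W V V)"
proof -
  have "\<And>z::complex. Re (cnj z * z) = (cmod z)\<^sup>2"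
    by (metis Re_complex_of_real complex_norm_square mult.commute)
  then show ?thesis by (simp add: nrm2_def ip_def)
qed

lemma ip_CS: "(cmod (ip W V U))\<^sup>2 \<le> nrm2 W V * nrm2 W U"
proof -
  have "cmod (ip W V U) \<le> (\<Sum>A\<in>Pow W. cmod (V A) * cmod (U A))"
    unfolding ip_def by (rule order.trans[OF norm_sum]) (simp add: norm_mult)
  then have "(cmod (ip W V U))\<^sup>2 \<le> (\<Sum>A\<in>Pow W. cmod (V A) * cmod (U A))\<^sup>2"
    by (simp add: power_mono)
  also have "\<dots> \<le> nrm2 W V * nrm2 W U"
    unfolding nrm2_def by (rule Cauchy_Schwarz_ineq_sum)
  finally show ?thesis .
qed

lemma sq_le_cancel:
  fixes N a :: real
  assumes "N \<ge> 0" "a \<ge> 0" "N\<^sup>2 \<le> a * N" shows "N \<le> a"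
proof (cases "N = 0")
  case False then have "N > 0" using assms by simp
  then show ?thesis using assms(3) by (simp add: power2_eq_square)
qed (use assms in simp)

lemma Re_le_bound:
  assumes "N \<ge> 0" "a \<ge> 0" "N \<le> Re z" "(cmod z)\<^sup>2 \<le> a * N" shows "N \<le> a"
proof -
  have "N \<le> cmod z" using assms complex_Re_le_cmod order.trans by blast
  then have "N\<^sup>2 \<le> (cmod z)\<^sup>2" using assms(1) power_mono by blast
  then show ?thesis using assms sq_le_cancel by (meson order.trans)
qed

lemma Re_le_bound':
  assumes "nrm2 W U \<le> Re z" "(cmod z)\<^sup>2 \<le> nrm2 W V * nrm2 W U" shows "nrm2 W U \<le> nrm2 W V"
  using Re_le_bound[OF nrm2_nonneg nrm2_nonneg assms] .

lemma contr_adj: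
  assumes fW: "finite W" and c: "contr W K"
  shows "contr W (adj K)"
  unfolding contr_def
proof
  fix V
  let ?N = "nrm2 W (mv W (adj K) V)"
  have e: "?N = Re (ip W V (mv W K (mv W (adj K) V)))"
    using ip_adj[OF fW, of "adj K" V "mv W (adj K) V"] by (simp add: nrm2_ip)
  have "(cmod (ip W V (mv W K (mv W (adj K) V))))\<^sup>2 \<le> nrm2 W V * nrm2 W (mv W K (mv W (adj K) V))"
    by (rule ip_CS)
  also have "\<dots> \<le> nrm2 W V * ?N"
    using c unfolding contr_def by (intro mult_left_mono) (auto simp: nrm2_nonneg)
  finally show "?N \<le> nrm2 W V"
    using Re_le_bound'[of W "mv W (adj K) V" "ip W V (mv W K (mv W (adj K) V))"] e by simp
qed

lemma contr_mm: "finite W \<Longrightarrow> contr W K \<Longrightarrow> contr W L \<Longrightarrow> contr W (mm W K L)"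
  unfolding contr_def by (simp add: mv_mm) (meson order.trans)

lemma contr_idm: "finite W \<Longrightarrow> contr W idm"
proof -
  assume fW: "finite W"
  have "\<And>V. nrm2 W (mv W idm V) = nrm2 W V"
  proof (rule nrm2_cong)
    fix V B assume "B \<subseteq> W"
    have "mv W idm V B = (\<Sum>C\<in>Pow W. if B = C then V C else 0)"
      using \<open>B \<subseteq> W\<close> by (auto simp: mv_def idm_def intro!: sum.cong)
    then show "mv W idm V B = V B" using fW \<open>B \<subseteq> W\<close> by simp
  qed
  then show ?thesis by (simp add: contr_def)
qed

lemma contr_unitary:
  assumes fW: "finite W"
    and u: "\<And>A B. A \<subseteq> W \<Longrightarrow> B \<subseteq> W \<Longrightarrow> (\<Sum>C\<in>Pow W. K A C * cnj (K B C)) = (if A = B then 1 else 0)"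
  shows "contr W K"
proof -
  have mvid: "mv W K (mv W (adj K) V) A = V A" if "A \<subseteq> W" for V A
  proof -
    have "mv W K (mv W (adj K) V) A = mv W (mm W K (adj K)) V A" by (simp add: mv_mm fW)
    also have "\<dots> = (\<Sum>B\<in>Pow W. (if A = B then 1 else 0) * V B)"
      using that by (auto simp: mv_def mm_def adj_def u intro!: sum.cong)
    also have "\<dots> = (\<Sum>B\<in>Pow W. if A = B then V B else 0)" by (intro sum.cong) auto
    also have "\<dots> = V A" using that fW by simp
    finally show ?thesis .
  qed
  have "contr W (adj K)" unfolding contr_def
  proof
    fix V
    have "nrm2 W (mv W (adj K) V) = Re (ip W V (mv W K (mv W (adj K) V)))"
      using ip_adj[OF fW, of "adj K" V "mv W (adj K) V"] by (simp add: nrm2_ip)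
    also have "ip W V (mv W K (mv W (adj K) V)) = ip W V V" by (rule ip_cong) (auto simp: mvid)
    finally show "nrm2 W (mv W (adj K) V) \<le> nrm2 W V" by (simp add: nrm2_ip)
  qed
  from contr_adj[OF fW this] show ?thesis by simp
qed

lemma contr_proj:
  assumes fW: "finite W"
    and h: "\<And>A B. A \<subseteq> W \<Longrightarrow> B \<subseteq> W \<Longrightarrow> K A B = cnj (K B A)"
    and i: "\<And>A C. A \<subseteq> W \<Longrightarrow> C \<subseteq> W \<Longrightarrow> (\<Sum>B\<in>Pow W. K A B * K B C) = K A C"
  shows "contr W K"
  unfolding contr_def
proof
  fix V
  let ?N = "nrm2 W (mv W K V)"
  have "?N = Re (ip W V (mv W (adj K) (mv W K V)))"
    using ip_adj[OF fW, of K V "mv W K V"] by (simp add: nrm2_ip)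
  also have "mv W (adj K) (mv W K V) = mv W (mm W K K) V"
    by (simp add: mv_mm[OF fW]) (rule mv_cong, auto simp: adj_def h[symmetric])
  also have "\<dots> = mv W K V" by (rule mv_cong) (auto simp: mm_def i)
  finally have e: "?N = Re (ip W V (mv W K V))" .
  have "(cmod (ip W V (mv W K V)))\<^sup>2 \<le> nrm2 W V * ?N" by (rule ip_CS)
  then show "?N \<le> nrm2 W V"
    using Re_le_bound'[of W "mv W K V" "ip W V (mv W K V)"] e by simp
qed

lemma loc_mono: "S \<subseteq> S' \<Longrightarrow> loc W S K \<Longrightarrow> loc W S' K"
  unfolding loc_def
proof (elim exE)
  fix u assume SS: "S \<subseteq> S'" and u: "\<forall>A B. A \<subseteq> W \<longrightarrow> B \<subseteq> W \<longrightarrow> K A B = (if A - S = B - S then u (A \<inter> S) (B \<inter> S) else 0)"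
  show "\<exists>u. \<forall>A B. A \<subseteq> W \<longrightarrow> B \<subseteq> W \<longrightarrow> K A B = (if A - S' = B - S' then u (A \<inter> S') (B \<inter> S') else 0)"
  proof (intro exI[of _ "\<lambda>\<alpha> \<beta>. if \<alpha> - S = \<beta> - S then u (\<alpha> \<inter> S) (\<beta> \<inter> S) else 0"] allI impI)
    fix A B assume "A \<subseteq> W" "B \<subseteq> W"
    moreover have "A - S' = B - S' \<Longrightarrow> (A \<inter> S' - S = B \<inter> S' - S) = (A - S = B - S)" by blast
    moreover have "A - S' \<noteq> B - S' \<Longrightarrow> A - S \<noteq> B - S" using SS by blast
    moreover have "A \<inter> S' \<inter> S = A \<inter> S" "B \<inter> S' \<inter> S = B \<inter> S" using SS by blast+
    ultimately show "K A B = (if A - S' = B - S' then (if A \<inter> S' - S = B \<inter> S' - S then u (A \<inter> S' \<inter> S) (B \<inter> S' \<inter> S) else 0) else 0)"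
      using u by auto
  qed
qed

lemma loc_adj: "loc W S K \<Longrightarrow> loc W S (adj K)"
  unfolding loc_def adj_def
  by (elim exE, rule exI[of _ "\<lambda>\<alpha> \<beta>. cnj (u \<beta> \<alpha>)" for u]) auto

lemma loc_idm: "loc W S idm"
  unfolding loc_def idm_def
proof (intro exI[of _ "\<lambda>\<alpha> \<beta>. if \<alpha> = \<beta> then 1 else 0"] allI impI)
  fix A B :: "nat set"
  have e: "(A = B) = (A - S = B - S \<and> A \<inter> S = B \<inter> S)" by blast
  show "(if A = B then 1 else 0) = (if A - S = B - S then if A \<inter> S = B \<inter> S then 1 else 0 else (0::complex))"
    by (simp only: e) simp
qed

lemma loc_E: "loc W T (Emat T \<sigma> \<tau>)"
  unfolding loc_def Emat_def
  by (rule exI[of _ "\<lambda>\<alpha> \<beta>. if \<alpha> = \<sigma> \<and> \<beta> = \<tau> then 1 else 0"]) auto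

lemma loc_C:
  assumes ST: "S \<inter> T = {}" and TW: "T \<subseteq> W" and st: "\<sigma> \<subseteq> T" "\<tau> \<subseteq> T" and l: "loc W (S \<union> T) K"
  shows "loc W S (Cmat T \<sigma> \<tau> K)"
proof -
  obtain u where u: "\<And>A B. A \<subseteq> W \<Longrightarrow> B \<subseteq> W \<Longrightarrow> K A B = (if A - (S \<union> T) = B - (S \<union> T) then u (A \<inter> (S \<union> T)) (B \<inter> (S \<union> T)) else 0)"
    using l unfolding loc_def by blast
  show ?thesis unfolding loc_def
  proof (intro exI[of _ "\<lambda>\<alpha> \<beta>. u (\<alpha> \<union> \<sigma>) (\<beta> \<union> \<tau>)"] allI impI)
    fix A B assume AB: "A \<subseteq> W" "B \<subseteq> W"
    have s1: "A - T \<union> \<sigma> \<subseteq> W" "B - T \<union> \<tau> \<subseteq> W" using AB st TW by auto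
    have s2: "(A - T \<union> \<sigma>) - (S \<union> T) = A - (S \<union> T)" "(B - T \<union> \<tau>) - (S \<union> T) = B - (S \<union> T)" using st by auto
    have s3: "(A - T \<union> \<sigma>) \<inter> (S \<union> T) = A \<inter> S \<union> \<sigma>" "(B - T \<union> \<tau>) \<inter> (S \<union> T) = B \<inter> S \<union> \<tau>" using st ST by auto
    have s4: "(A \<inter> T = B \<inter> T \<and> A - (S \<union> T) = B - (S \<union> T)) = (A - S = B - S)" using ST by blast
    have K: "K (A - T \<union> \<sigma>) (B - T \<union> \<tau>) = (if A - (S \<union> T) = B - (S \<union> T) then u (A \<inter> S \<union> \<sigma>) (B \<inter> S \<union> \<tau>) else 0)"
      using u[OF s1] by (simp only: s2 s3)
    have "Cmat T \<sigma> \<tau> K A B = (if A \<inter> T = B \<inter> T then (if A - (S \<union> T) = B - (S \<union> T) then u (A \<inter> S \<union> \<sigma>) (B \<inter> S \<union> \<tau>) else 0) else 0)"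
      unfolding Cmat_def K ..
    also have "\<dots> = (if A \<inter> T = B \<inter> T \<and> A - (S \<union> T) = B - (S \<union> T) then u (A \<inter> S \<union> \<sigma>) (B \<inter> S \<union> \<tau>) else 0)"
      by (cases "A \<inter> T = B \<inter> T"; cases "A - (S \<union> T) = B - (S \<union> T)") simp_all
    also have "\<dots> = (if A - S = B - S then u (A \<inter> S \<union> \<sigma>) (B \<inter> S \<union> \<tau>) else 0)"
      by (simp only: s4)
    finally show "Cmat T \<sigma> \<tau> K A B = (if A - S = B - S then u (A \<inter> S \<union> \<sigma>) (B \<inter> S \<union> \<tau>) else 0)" .
  qed
qed

lemma loc_mm:
  assumes fW: "finite W" and SW: "S \<subseteq> W" and lK: "loc W S K" and lL: "loc W S L"
  shows "loc W S (mm W K L)"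
proof -
  obtain u where u: "\<And>A B. A \<subseteq> W \<Longrightarrow> B \<subseteq> W \<Longrightarrow> K A B = (if A - S = B - S then u (A \<inter> S) (B \<inter> S) else 0)"
    using lK unfolding loc_def by blast
  obtain w where w: "\<And>A B. A \<subseteq> W \<Longrightarrow> B \<subseteq> W \<Longrightarrow> L A B = (if A - S = B - S then w (A \<inter> S) (B \<inter> S) else 0)"
    using lL unfolding loc_def by blast
  show ?thesis unfolding loc_def
  proof (intro exI[of _ "\<lambda>\<alpha> \<gamma>. \<Sum>\<beta>\<in>Pow S. u \<alpha> \<beta> * w \<beta> \<gamma>"] allI impI)
    fix A C assume AC: "A \<subseteq> W" "C \<subseteq> W"
    have "mm W K L A C = (\<Sum>\<tau>\<in>Pow S. \<Sum>B0\<in>Pow (W - S). K A (B0 \<union> \<tau>) * L (B0 \<union> \<tau>) C)"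
      unfolding mm_def by (rule sum_Pow_split[OF fW SW])
    also have "\<dots> = (\<Sum>\<tau>\<in>Pow S. \<Sum>B0\<in>Pow (W - S). if B0 = A - S then
                         (if A - S = C - S then u (A \<inter> S) \<tau> * w \<tau> (C \<inter> S) else 0) else 0)"
    proof (intro sum.cong refl)
      fix \<tau> B0 assume tb: "\<tau> \<in> Pow S" "B0 \<in> Pow (W - S)"
      have e: "(B0 \<union> \<tau>) - S = B0" "(B0 \<union> \<tau>) \<inter> S = \<tau>" "B0 \<union> \<tau> \<subseteq> W" using tb SW by auto
      show "K A (B0 \<union> \<tau>) * L (B0 \<union> \<tau>) C = (if B0 = A - S then (if A - S = C - S then u (A \<inter> S) \<tau> * w \<tau> (C \<inter> S) else 0) else 0)"
        using u[OF AC(1) e(3)] w[OF e(3) AC(2)] e by auto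
    qed
    also have "\<dots> = (\<Sum>\<tau>\<in>Pow S. if A - S = C - S then u (A \<inter> S) \<tau> * w \<tau> (C \<inter> S) else 0)"
      using fW AC by (intro sum.cong refl) (auto simp: sum.delta)
    also have "\<dots> = (if A - S = C - S then \<Sum>\<tau>\<in>Pow S. u (A \<inter> S) \<tau> * w \<tau> (C \<inter> S) else 0)"
      by simp
    finally show "mm W K L A C = (if A - S = C - S then \<Sum>\<beta>\<in>Pow S. u (A \<inter> S) \<beta> * w \<beta> (C \<inter> S) else 0)" .
  qed
qed

lemma loc_commute:
  assumes fW: "finite W" and SW: "S \<subseteq> W" and lK: "loc W S K" and lL: "loc W (W - S) L"
  shows "mv W K (mv W L V) = mv W L (mv W K V)"
proof -
  obtain u where u: "\<And>A B. A \<subseteq> W \<Longrightarrow> B \<subseteq> W \<Longrightarrow> K A B = (if A - S = B - S then u (A \<inter> S) (B \<inter> S) else 0)"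
    using lK unfolding loc_def by blast
  obtain w0 where w0: "\<And>A B. A \<subseteq> W \<Longrightarrow> B \<subseteq> W \<Longrightarrow> L A B = (if A - (W - S) = B - (W - S) then w0 (A \<inter> (W - S)) (B \<inter> (W - S)) else 0)"
    using lL unfolding loc_def by blast
  have w: "L A B = (if A \<inter> S = B \<inter> S then w0 (A - S) (B - S) else 0)" if "A \<subseteq> W" "B \<subseteq> W" for A B
  proof -
    have "A - (W - S) = A \<inter> S" "B - (W - S) = B \<inter> S" "A \<inter> (W - S) = A - S" "B \<inter> (W - S) = B - S"
      using that by auto
    then show ?thesis using w0[OF that] by simp
  qed
  have key1: "mm W K L A C = u (A \<inter> S) (C \<inter> S) * w0 (A - S) (C - S)" if AC: "A \<subseteq> W" "C \<subseteq> W" for A C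
  proof -
    let ?B = "(A - S) \<union> (C \<inter> S)"
    have "mm W K L A C = K A ?B * L ?B C"
      unfolding mm_def
    proof (rule sum_single)
      show "finite (Pow W)" "?B \<in> Pow W" using fW AC by auto
      fix B assume "B \<in> Pow W" "B \<noteq> ?B"
      then have "B - S \<noteq> A - S \<or> B \<inter> S \<noteq> C \<inter> S" by blast
      then show "K A B * L B C = 0" using u[OF AC(1), of B] w[of B C] \<open>B \<in> Pow W\<close> AC by auto
    qed
    also have "\<dots> = u (A \<inter> S) (C \<inter> S) * w0 (A - S) (C - S)"
    proof -
      have "A - S = ?B - S" "?B \<inter> S = C \<inter> S" "?B \<subseteq> W" using AC by auto
      then show ?thesis using u[OF AC(1) \<open>?B \<subseteq> W\<close>] w[OF \<open>?B \<subseteq> W\<close> AC(2)] by simp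
    qed
    finally show ?thesis .
  qed
  have key2: "mm W L K A C = u (A \<inter> S) (C \<inter> S) * w0 (A - S) (C - S)" if AC: "A \<subseteq> W" "C \<subseteq> W" for A C
  proof -
    let ?B = "(A \<inter> S) \<union> (C - S)"
    have "mm W L K A C = L A ?B * K ?B C"
      unfolding mm_def
    proof (rule sum_single)
      show "finite (Pow W)" "?B \<in> Pow W" using fW AC by auto
      fix B assume "B \<in> Pow W" "B \<noteq> ?B"
      then have "B \<inter> S \<noteq> A \<inter> S \<or> B - S \<noteq> C - S" by blast
      then show "L A B * K B C = 0" using u[of B C] w[OF AC(1), of B] \<open>B \<in> Pow W\<close> AC by auto
    qed
    also have "\<dots> = u (A \<inter> S) (C \<inter> S) * w0 (A - S) (C - S)"
    proof -
      have "A \<inter> S = ?B \<inter> S" "?B - S = C - S" "?B \<subseteq> W" using AC by auto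
      then show ?thesis using u[OF \<open>?B \<subseteq> W\<close> AC(2)] w[OF AC(1) \<open>?B \<subseteq> W\<close>] by (simp add: mult.commute)
    qed
    finally show ?thesis .
  qed
  have "mv W (mm W K L) V = mv W (mm W L K) V"
    by (rule mv_cong) (auto simp: key1 key2)
  then show ?thesis by (simp add: mv_mm[OF fW])
qed

lemma mv_E:
  assumes fW: "finite W" and TW: "T \<subseteq> W" and t: "\<tau> \<subseteq> T"
  shows "mv W (Emat T \<sigma> \<tau>) V M = (if M \<subseteq> W \<and> M \<inter> T = \<sigma> then V ((M - T) \<union> \<tau>) else 0)"
proof (cases "M \<subseteq> W")
  case True
  have "mv W (Emat T \<sigma> \<tau>) V M = (\<Sum>B\<in>Pow W. if B = (M - T) \<union> \<tau> then (if M \<inter> T = \<sigma> then V B else 0) else 0)"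
    unfolding mv_def Emat_def using True t
    by (auto intro!: sum.cong)
  also have "\<dots> = (if M \<inter> T = \<sigma> then V ((M - T) \<union> \<tau>) else 0)"
    using fW True t TW by auto
  finally show ?thesis using True by simp
qed simp

lemma contr_E:
  assumes fW: "finite W" and TW: "T \<subseteq> W" and st: "\<sigma> \<subseteq> T" "\<tau> \<subseteq> T"
  shows "contr W (Emat T \<sigma> \<tau>)"
  unfolding contr_def
proof
  fix V
  have "nrm2 W (mv W (Emat T \<sigma> \<tau>) V) = (\<Sum>M\<in>Pow W. if M \<inter> T = \<sigma> then (cmod (V ((M - T) \<union> \<tau>)))\<^sup>2 else 0)"
    unfolding nrm2_def by (intro sum.cong refl) (auto simp: mv_E[OF fW TW st(2)])
  also have "\<dots> = (\<Sum>B0\<in>Pow (W - T). (cmod (V (((B0 \<union> \<sigma>) - T) \<union> \<tau>)))\<^sup>2)"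
    by (rule sum_Pow_fix[OF fW TW st(1)])
  also have "\<dots> = (\<Sum>B0\<in>Pow (W - T). (cmod (V (B0 \<union> \<tau>)))\<^sup>2)"
  proof (intro sum.cong refl)
    fix B0 assume "B0 \<in> Pow (W - T)"
    then have "(B0 \<union> \<sigma>) - T = B0" using st by auto
    then show "(cmod (V (((B0 \<union> \<sigma>) - T) \<union> \<tau>)))\<^sup>2 = (cmod (V (B0 \<union> \<tau>)))\<^sup>2" by simp
  qed
  also have "\<dots> \<le> nrm2 W V"
    unfolding nrm2_def by (rule sum_Pow_sub_le[OF fW TW st(2)]) simp
  finally show "nrm2 W (mv W (Emat T \<sigma> \<tau>) V) \<le> nrm2 W V" .
qed

lemma decomp:
  assumes fW: "finite W" and TW: "T \<subseteq> W"
  shows "mv W K V A = (\<Sum>p\<in>Pow T \<times> Pow T. mv W (Cmat T (fst p) (snd p) K) (mv W (Emat T (fst p) (snd p)) V) A)"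
proof -
  have fT: "finite T" using fW TW finite_subset by blast
  show ?thesis
  proof (cases "A \<subseteq> W")
    case AW: True
    have step: "mv W (Cmat T \<sigma> \<tau> K) (mv W (Emat T \<sigma> \<tau>) V) A
        = (if A \<inter> T = \<sigma> then (\<Sum>B0\<in>Pow (W - T). K A (B0 \<union> \<tau>) * V (B0 \<union> \<tau>)) else 0)"
      if st: "\<sigma> \<subseteq> T" "\<tau> \<subseteq> T" for \<sigma> \<tau>
    proof -
      have "mv W (Cmat T \<sigma> \<tau> K) (mv W (Emat T \<sigma> \<tau>) V) A
          = (\<Sum>M\<in>Pow W. if M \<inter> T = \<sigma> then (if A \<inter> T = \<sigma> then K A ((M - T) \<union> \<tau>) * V ((M - T) \<union> \<tau>) else 0) else 0)"
      proof -
        have "\<And>M. M \<subseteq> W \<Longrightarrow> Cmat T \<sigma> \<tau> K A M * mv W (Emat T \<sigma> \<tau>) V M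
          = (if M \<inter> T = \<sigma> then (if A \<inter> T = \<sigma> then K A ((M - T) \<union> \<tau>) * V ((M - T) \<union> \<tau>) else 0) else 0)"
        proof -
          fix M assume "M \<subseteq> W"
          have "A \<inter> T = \<sigma> \<Longrightarrow> (A - T) \<union> \<sigma> = A" by blast
          then show "?thesis M" using \<open>M \<subseteq> W\<close> by (auto simp: Cmat_def mv_E[OF fW TW st(2)])
        qed
        then show ?thesis using AW by (auto simp: mv_def intro!: sum.cong)
      qed
      also have "\<dots> = (\<Sum>B0\<in>Pow (W - T). if A \<inter> T = \<sigma> then K A (((B0 \<union> \<sigma>) - T) \<union> \<tau>) * V (((B0 \<union> \<sigma>) - T) \<union> \<tau>) else 0)"
        by (rule sum_Pow_fix[OF fW TW st(1)])
      also have "\<dots> = (\<Sum>B0\<in>Pow (W - T). if A \<inter> T = \<sigma> then K A (B0 \<union> \<tau>) * V (B0 \<union> \<tau>) else 0)"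
      proof (intro sum.cong refl)
        fix B0 assume "B0 \<in> Pow (W - T)"
        then have "(B0 \<union> \<sigma>) - T = B0" using st by auto
        then show "(if A \<inter> T = \<sigma> then K A (((B0 \<union> \<sigma>) - T) \<union> \<tau>) * V (((B0 \<union> \<sigma>) - T) \<union> \<tau>) else 0)
          = (if A \<inter> T = \<sigma> then K A (B0 \<union> \<tau>) * V (B0 \<union> \<tau>) else 0)" by simp
      qed
      also have "\<dots> = (if A \<inter> T = \<sigma> then (\<Sum>B0\<in>Pow (W - T). K A (B0 \<union> \<tau>) * V (B0 \<union> \<tau>)) else 0)"
        by simp
      finally show ?thesis .
    qed
    have "(\<Sum>p\<in>Pow T \<times> Pow T. mv W (Cmat T (fst p) (snd p) K) (mv W (Emat T (fst p) (snd p)) V) A) = (\<Sum>\<sigma>\<in>Pow T. \<Sum>\<tau>\<in>Pow T. mv W (Cmat T \<sigma> \<tau> K) (mv W (Emat T \<sigma> \<tau>) V) A)"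
      by (simp add: sum.cartesian_product split_beta)
    also have "\<dots> = (\<Sum>\<sigma>\<in>Pow T. if A \<inter> T = \<sigma> then (\<Sum>\<tau>\<in>Pow T. \<Sum>B0\<in>Pow (W - T). K A (B0 \<union> \<tau>) * V (B0 \<union> \<tau>)) else 0)"
      by (intro sum.cong refl) (auto simp: step)
    also have "\<dots> = (\<Sum>\<tau>\<in>Pow T. \<Sum>B0\<in>Pow (W - T). K A (B0 \<union> \<tau>) * V (B0 \<union> \<tau>))"
      using fT by simp
    also have "\<dots> = (\<Sum>B\<in>Pow W. K A B * V B)"
      by (rule sum_Pow_split[OF fW TW, symmetric])
    also have "\<dots> = mv W K V A" using AW by (simp add: mv_def)
    finally show ?thesis by simp
  qed simp
qed

lemma contr_C:
  assumes fW: "finite W" and TW: "T \<subseteq> W" and st: "\<sigma> \<subseteq> T" "\<tau> \<subseteq> T" and c: "contr W K"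
  shows "contr W (Cmat T \<sigma> \<tau> K)"
  unfolding contr_def
proof
  fix V :: "nat set \<Rightarrow> complex"
  define Vr where "Vr \<rho> = (\<lambda>B. if B \<inter> T = \<tau> then V ((B - T) \<union> \<rho>) else 0)" for \<rho>
  have inner: "mv W (Cmat T \<sigma> \<tau> K) V (A0 \<union> \<rho>) = mv W K (Vr \<rho>) (A0 \<union> \<sigma>)"
    if a: "A0 \<in> Pow (W - T)" "\<rho> \<in> Pow T" for A0 \<rho>
  proof -
    have s1: "A0 \<union> \<rho> \<subseteq> W" "A0 \<union> \<sigma> \<subseteq> W" "(A0 \<union> \<rho>) \<inter> T = \<rho>" "(A0 \<union> \<rho>) - T = A0"
      using a st TW by auto
    have "mv W (Cmat T \<sigma> \<tau> K) V (A0 \<union> \<rho>) = (\<Sum>B\<in>Pow W. if B \<inter> T = \<rho> then K (A0 \<union> \<sigma>) ((B - T) \<union> \<tau>) * V B else 0)"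
      using s1 by (auto simp: mv_def Cmat_def intro!: sum.cong)
    also have "\<dots> = (\<Sum>B0\<in>Pow (W - T). K (A0 \<union> \<sigma>) (((B0 \<union> \<rho>) - T) \<union> \<tau>) * V (B0 \<union> \<rho>))"
      using a by (intro sum_Pow_fix[OF fW TW]) auto
    also have "\<dots> = (\<Sum>B0\<in>Pow (W - T). K (A0 \<union> \<sigma>) (B0 \<union> \<tau>) * V (B0 \<union> \<rho>))"
    proof (intro sum.cong refl)
      fix B0 assume "B0 \<in> Pow (W - T)"
      then have "(B0 \<union> \<rho>) - T = B0" using a by auto
      then show "K (A0 \<union> \<sigma>) (((B0 \<union> \<rho>) - T) \<union> \<tau>) * V (B0 \<union> \<rho>) = K (A0 \<union> \<sigma>) (B0 \<union> \<tau>) * V (B0 \<union> \<rho>)" by simp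
    qed
    also have "\<dots> = (\<Sum>B0\<in>Pow (W - T). K (A0 \<union> \<sigma>) (B0 \<union> \<tau>) * V (((B0 \<union> \<tau>) - T) \<union> \<rho>))"
    proof (intro sum.cong refl)
      fix B0 assume "B0 \<in> Pow (W - T)"
      then have "(B0 \<union> \<tau>) - T = B0" using st by auto
      then show "K (A0 \<union> \<sigma>) (B0 \<union> \<tau>) * V (B0 \<union> \<rho>) = K (A0 \<union> \<sigma>) (B0 \<union> \<tau>) * V (((B0 \<union> \<tau>) - T) \<union> \<rho>)" by simp
    qed
    also have "\<dots> = (\<Sum>B\<in>Pow W. if B \<inter> T = \<tau> then K (A0 \<union> \<sigma>) B * V ((B - T) \<union> \<rho>) else 0)"
      by (rule sum_Pow_fix[OF fW TW st(2), symmetric])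
    also have "\<dots> = mv W K (Vr \<rho>) (A0 \<union> \<sigma>)"
      using s1 by (auto simp: mv_def Vr_def intro!: sum.cong)
    finally show ?thesis .
  qed
  have nVr: "nrm2 W (Vr \<rho>) = (\<Sum>B0\<in>Pow (W - T). (cmod (V (B0 \<union> \<rho>)))\<^sup>2)" if "\<rho> \<in> Pow T" for \<rho>
  proof -
    have "nrm2 W (Vr \<rho>) = (\<Sum>B\<in>Pow W. if B \<inter> T = \<tau> then (cmod (V ((B - T) \<union> \<rho>)))\<^sup>2 else 0)"
      unfolding nrm2_def Vr_def by (intro sum.cong refl) auto
    also have "\<dots> = (\<Sum>B0\<in>Pow (W - T). (cmod (V (((B0 \<union> \<tau>) - T) \<union> \<rho>)))\<^sup>2)"
      by (rule sum_Pow_fix[OF fW TW st(2)])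
    also have "\<dots> = (\<Sum>B0\<in>Pow (W - T). (cmod (V (B0 \<union> \<rho>)))\<^sup>2)"
    proof (intro sum.cong refl)
      fix B0 assume "B0 \<in> Pow (W - T)"
      then have "(B0 \<union> \<tau>) - T = B0" using st by auto
      then show "(cmod (V (((B0 \<union> \<tau>) - T) \<union> \<rho>)))\<^sup>2 = (cmod (V (B0 \<union> \<rho>)))\<^sup>2" by simp
    qed
    finally show ?thesis .
  qed
  have "nrm2 W (mv W (Cmat T \<sigma> \<tau> K) V) = (\<Sum>\<rho>\<in>Pow T. \<Sum>A0\<in>Pow (W - T). (cmod (mv W (Cmat T \<sigma> \<tau> K) V (A0 \<union> \<rho>)))\<^sup>2)"
    unfolding nrm2_def by (rule sum_Pow_split[OF fW TW])
  also have "\<dots> = (\<Sum>\<rho>\<in>Pow T. \<Sum>A0\<in>Pow (W - T). (cmod (mv W K (Vr \<rho>) (A0 \<union> \<sigma>)))\<^sup>2)"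
    by (intro sum.cong refl) (simp add: inner)
  also have "\<dots> \<le> (\<Sum>\<rho>\<in>Pow T. nrm2 W (mv W K (Vr \<rho>)))"
    unfolding nrm2_def by (intro sum_mono sum_Pow_sub_le[OF fW TW st(1)]) simp
  also have "\<dots> \<le> (\<Sum>\<rho>\<in>Pow T. nrm2 W (Vr \<rho>))"
    using c unfolding contr_def by (intro sum_mono) auto
  also have "\<dots> = (\<Sum>\<rho>\<in>Pow T. \<Sum>B0\<in>Pow (W - T). (cmod (V (B0 \<union> \<rho>)))\<^sup>2)"
    by (intro sum.cong refl) (simp add: nVr)
  also have "\<dots> = nrm2 W V"
    unfolding nrm2_def by (rule sum_Pow_split[OF fW TW, symmetric])
  finally show "nrm2 W (mv W (Cmat T \<sigma> \<tau> K) V) \<le> nrm2 W V" .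
qed

definition dec :: "nat \<Rightarrow> nat \<Rightarrow> nat set" where
  "dec N a = {i. i < N \<and> bit a i}"
definition enc :: "nat \<Rightarrow> nat set \<Rightarrow> nat" where
  "enc N = the_inv_into {..<2^N} (dec N)"

lemma bit_small: "(a::nat) < 2^N \<Longrightarrow> bit a i \<longleftrightarrow> i < N \<and> bit a i"
  by (metis bit_take_bit_iff take_bit_nat_eq_self_iff)

lemma dec_inj: "inj_on (dec N) {..<2^N}"
proof (rule inj_onI)
  fix a b assume ab: "a \<in> {..<2^N}" "b \<in> {..<2^N}" "dec N a = dec N b"
  show "a = b"
  proof (rule bit_eqI)
    fix i
    have "(i < N \<and> bit a i) = (i < N \<and> bit b i)" using ab(3) unfolding dec_def by blast
    then show "bit a i = bit b i" using bit_small[of a N i] bit_small[of b N i] ab by auto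
  qed
qed

lemma dec_bij: "bij_betw (dec N) {..<2^N} (Pow {..<N})"
proof -
  have sub: "dec N ` {..<2^N} \<subseteq> Pow {..<N}" by (auto simp: dec_def)
  have "card (dec N ` {..<2^N}) = card (Pow {..<N})"
    using card_image[OF dec_inj[of N]] by (simp add: card_Pow)
  then have "dec N ` {..<2^N} = Pow {..<N}" using sub by (intro card_subset_eq) auto
  then show ?thesis using dec_inj by (simp add: bij_betw_def)
qed

lemma enc_bij: "bij_betw (enc N) (Pow {..<N}) {..<2^N}"
  unfolding enc_def by (rule bij_betw_the_inv_into[OF dec_bij])

lemma enc_lt: "A \<subseteq> {..<N} \<Longrightarrow> enc N A < 2^N"
  using enc_bij[of N] by (auto simp: bij_betw_def)

lemma dec_enc: "A \<subseteq> {..<N} \<Longrightarrow> dec N (enc N A) = A"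
  unfolding enc_def using f_the_inv_into_f_bij_betw[OF dec_bij] by simp

lemma enc_dec: "a < 2^N \<Longrightarrow> enc N (dec N a) = a"
  unfolding enc_def using the_inv_into_f_f[OF dec_inj] by simp

lemma enc_inj: "A \<subseteq> {..<N} \<Longrightarrow> B \<subseteq> {..<N} \<Longrightarrow> enc N A = enc N B \<longleftrightarrow> A = B"
  by (metis dec_enc)

lemma bit_enc: "A \<subseteq> {..<N} \<Longrightarrow> bit (enc N A) i \<longleftrightarrow> i \<in> A"
proof -
  assume A: "A \<subseteq> {..<N}"
  have "bit (enc N A) i \<longleftrightarrow> i < N \<and> bit (enc N A) i" using bit_small enc_lt[OF A] by blast
  also have "\<dots> \<longleftrightarrow> i \<in> dec N (enc N A)" by (simp add: dec_def)
  finally show ?thesis using dec_enc[OF A] by simp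
qed

lemma sum_enc: "(\<Sum>a<2^N. g a) = (\<Sum>A\<in>Pow {..<N}. g (enc N A))"
  by (rule sum.reindex_bij_betw[OF enc_bij, symmetric])

definition tm :: "nat \<Rightarrow> (nat \<Rightarrow> nat \<Rightarrow> complex) \<Rightarrow> nat set \<Rightarrow> nat set \<Rightarrow> complex" where
  "tm N M = (\<lambda>A B. M (enc N A) (enc N B))"
definition tv :: "nat \<Rightarrow> (nat \<Rightarrow> complex) \<Rightarrow> nat set \<Rightarrow> complex" where
  "tv N v = (\<lambda>A. if A \<subseteq> {..<N} then v (enc N A) else 0)"

lemma tv_apply: "tv N (apply_op (2^N) M v) = mv {..<N} (tm N M) (tv N v)"
proof (rule ext)
  fix A show "tv N (apply_op (2^N) M v) A = mv {..<N} (tm N M) (tv N v) A"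
    by (auto simp: tv_def mv_def tm_def apply_op_def sum_enc intro!: sum.cong)
qed

lemma tv_sqnorm: "sqnorm (2^N) v = nrm2 {..<N} (tv N v)"
  by (auto simp: sqnorm_def nrm2_def tv_def sum_enc intro!: sum.cong)

lemma tv_run: "tv N (run_state (2^N) \<psi> U j) = (if j = 0 then tv N \<psi> else mv {..<N} (tm N (U (j - 1))) (tv N (run_state (2^N) \<psi> U (j - 1))))"
  by (cases j) (simp_all add: tv_apply)

lemma unitary_contr: "is_unitary (2^N) M \<Longrightarrow> contr {..<N} (tm N M)"
proof (rule contr_unitary)
  assume u: "is_unitary (2^N) M"
  fix A B assume AB: "A \<subseteq> {..<N}" "B \<subseteq> {..<N}"
  have "(\<Sum>C\<in>Pow {..<N}. tm N M A C * cnj (tm N M B C)) = (\<Sum>c<2^N. M (enc N A) c * cnj (M (enc N B) c))"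
    by (simp add: sum_enc tm_def)
  also have "\<dots> = (if enc N A = enc N B then 1 else 0)"
    using u enc_lt[OF AB(1)] enc_lt[OF AB(2)] unfolding is_unitary_def by blast
  also have "\<dots> = (if A = B then 1 else 0)" using enc_inj[OF AB] by simp
  finally show "(\<Sum>C\<in>Pow {..<N}. tm N M A C * cnj (tm N M B C)) = (if A = B then 1 else 0)" .
qed simp

lemma proj_contr: "is_projector (2^N) M \<Longrightarrow> contr {..<N} (tm N M)"
proof (rule contr_proj)
  assume p: "is_projector (2^N) M"
  fix A B assume AB: "A \<subseteq> {..<N}" "B \<subseteq> {..<N}"
  show "tm N M A B = cnj (tm N M B A)"
    using p enc_lt[OF AB(1)] enc_lt[OF AB(2)] unfolding is_projector_def tm_def by blast
next
  assume p: "is_projector (2^N) M"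
  fix A C assume AC: "A \<subseteq> {..<N}" "C \<subseteq> {..<N}"
  have "(\<Sum>B\<in>Pow {..<N}. tm N M A B * tm N M B C) = (\<Sum>b<2^N. M (enc N A) b * M b (enc N C))"
    by (simp add: sum_enc tm_def)
  also have "\<dots> = M (enc N A) (enc N C)"
    using p enc_lt[OF AC(1)] enc_lt[OF AC(2)] unfolding is_projector_def by blast
  finally show "(\<Sum>B\<in>Pow {..<N}. tm N M A B * tm N M B C) = tm N M A C" by (simp add: tm_def)
qed simp

lemma local_loc: "local_op N S M \<Longrightarrow> loc {..<N} S (tm N M)"
proof -
  assume "local_op N S M"
  then obtain u where u: "\<And>a b. a < 2^N \<Longrightarrow> b < 2^N \<Longrightarrow> M a b =
          (if (\<forall>i<N. i \<notin> S \<longrightarrow> (bit a i \<longleftrightarrow> bit b i))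
           then u (\<lambda>i. i \<in> S \<and> bit a i) (\<lambda>i. i \<in> S \<and> bit b i) else 0)"
    unfolding local_op_def by blast
  show ?thesis unfolding loc_def
  proof (intro exI[of _ "\<lambda>\<alpha> \<beta>. u (\<lambda>i. i \<in> \<alpha>) (\<lambda>i. i \<in> \<beta>)"] allI impI)
    fix A B assume AB: "A \<subseteq> {..<N}" "B \<subseteq> {..<N}"
    have c: "(\<forall>i<N. i \<notin> S \<longrightarrow> (bit (enc N A) i \<longleftrightarrow> bit (enc N B) i)) = (A - S = B - S)"
      using AB by (auto simp: bit_enc)
    have p: "(\<lambda>i. i \<in> S \<and> bit (enc N A) i) = (\<lambda>i. i \<in> A \<inter> S)" "(\<lambda>i. i \<in> S \<and> bit (enc N B) i) = (\<lambda>i. i \<in> B \<inter> S)"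
      using AB by (auto simp: bit_enc)
    show "tm N M A B = (if A - S = B - S then u (\<lambda>i. i \<in> A \<inter> S) (\<lambda>i. i \<in> B \<inter> S) else 0)"
      unfolding tm_def using u[OF enc_lt[OF AB(1)] enc_lt[OF AB(2)]] c p by simp
  qed
qed

type_synonym mat = "nat set \<Rightarrow> nat set \<Rightarrow> complex"

lemma mv_idm: "finite W \<Longrightarrow> A \<subseteq> W \<Longrightarrow> mv W idm V A = V A"
proof -
  assume fW: "finite W" and AW: "A \<subseteq> W"
  have "mv W idm V A = (\<Sum>C\<in>Pow W. if A = C then V C else 0)"
    using AW by (auto simp: mv_def idm_def intro!: sum.cong)
  then show ?thesis using fW AW by simp
qed

lemma mv_sum: "mv W K (\<lambda>B. \<Sum>r\<in>R. g r B) A = (\<Sum>r\<in>R. mv W K (g r) A)"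
proof (cases "A \<subseteq> W")
  case True
  have "mv W K (\<lambda>B. \<Sum>r\<in>R. g r B) A = (\<Sum>B\<in>Pow W. \<Sum>r\<in>R. K A B * g r B)"
    using True by (simp add: mv_def sum_distrib_left)
  also have "\<dots> = (\<Sum>r\<in>R. \<Sum>B\<in>Pow W. K A B * g r B)" by (rule sum.swap)
  finally show ?thesis using True by (simp add: mv_def)
qed simp

fun Iset :: "(nat \<Rightarrow> nat set) \<Rightarrow> nat \<Rightarrow> (nat set \<times> nat set) list set" where
  "Iset T 0 = {[]}"
| "Iset T (Suc j) = (\<lambda>(r, e). r @ [e]) ` (Iset T j \<times> (Pow (T j) \<times> Pow (T j)))"

fun Xop :: "nat set \<Rightarrow> (nat \<Rightarrow> bool) \<Rightarrow> (nat \<Rightarrow> nat set) \<Rightarrow> (nat \<Rightarrow> mat) \<Rightarrow> nat \<Rightarrow> (nat set \<times> nat set) list \<Rightarrow> mat" where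
  "Xop W s T KA 0 t = idm"
| "Xop W s T KA (Suc j) t = (if s j then Cmat (T j) (fst (last t)) (snd (last t)) (mm W (KA j) (Xop W s T KA j (butlast t)))
      else mm W (Xop W s T KA j (butlast t)) (Emat (T j) (fst (last t)) (snd (last t))))"

fun Yop :: "nat set \<Rightarrow> (nat \<Rightarrow> bool) \<Rightarrow> (nat \<Rightarrow> nat set) \<Rightarrow> (nat \<Rightarrow> mat) \<Rightarrow> nat \<Rightarrow> (nat set \<times> nat set) list \<Rightarrow> mat" where
  "Yop W s T KB 0 t = idm"
| "Yop W s T KB (Suc j) t = (if s j then mm W (Emat (T j) (fst (last t)) (snd (last t))) (Yop W s T KB j (butlast t))
      else Cmat (T j) (fst (last t)) (snd (last t)) (mm W (KB j) (Yop W s T KB j (butlast t))))"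

fun St :: "nat set \<Rightarrow> (nat \<Rightarrow> bool) \<Rightarrow> (nat \<Rightarrow> mat) \<Rightarrow> (nat \<Rightarrow> mat) \<Rightarrow> (nat set \<Rightarrow> complex) \<Rightarrow> nat \<Rightarrow> nat set \<Rightarrow> complex" where
  "St W s KA KB \<Psi> 0 = \<Psi>"
| "St W s KA KB \<Psi> (Suc j) = mv W (if s j then KA j else KB j) (St W s KA KB \<Psi> j)"

lemma Iset_finite: "(\<And>i. i < j \<Longrightarrow> finite (T i)) \<Longrightarrow> finite (Iset T j)"
  by (induction j) auto

lemma Iset_card: "(\<And>i. i < j \<Longrightarrow> finite (T i)) \<Longrightarrow> card (Iset T j) \<le> 4 ^ (\<Sum>i<j. card (T i))"
proof (induction j)
  case (Suc j)
  have "finite (Iset T j \<times> (Pow (T j) \<times> Pow (T j)))" using Suc.prems by (simp add: Iset_finite)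
  then have "card (Iset T (Suc j)) \<le> card (Iset T j \<times> (Pow (T j) \<times> Pow (T j)))"
    unfolding Iset.simps by (rule card_image_le)
  also have "\<dots> = card (Iset T j) * (2 ^ card (T j) * 2 ^ card (T j))"
    using Suc.prems by (simp add: card_cartesian_product card_Pow)
  also have "\<dots> \<le> 4 ^ (\<Sum>i<j. card (T i)) * 4 ^ card (T j)"
    using Suc by (intro mult_mono) (auto simp: power_mult_distrib[symmetric])
  also have "\<dots> = 4 ^ (\<Sum>i<Suc j. card (T i))" by (simp add: power_add)
  finally show ?case .
qed simp

lemma Iset_sum: "(\<Sum>t\<in>Iset T (Suc j). g t) = (\<Sum>r\<in>Iset T j. \<Sum>p\<in>Pow (T j) \<times> Pow (T j). g (r @ [p]))"
proof -
  have inj: "inj_on (\<lambda>(r, e). r @ [e]) (Iset T j \<times> (Pow (T j) \<times> Pow (T j)))"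
    by (auto simp: inj_on_def)
  have "(\<Sum>t\<in>Iset T (Suc j). g t) = (\<Sum>x\<in>Iset T j \<times> (Pow (T j) \<times> Pow (T j)). g (case x of (r, e) \<Rightarrow> r @ [e]))"
    using sum.reindex[OF inj, of g] by simp
  also have "\<dots> = (\<Sum>r\<in>Iset T j. \<Sum>p\<in>Pow (T j) \<times> Pow (T j). g (r @ [p]))"
    by (simp add: sum.cartesian_product split_beta)
  finally show ?thesis .
qed

lemma invariant:
  assumes fW: "finite W"
    and Al0: "Al 0 \<subseteq> W"
    and Alstep: "\<And>j. j < k \<Longrightarrow> Al (Suc j) = (if s j then Al j - T j else Al j \<union> T j)"
    and Tsub: "\<And>j. j < k \<Longrightarrow> (if s j then T j \<subseteq> Al j else T j \<subseteq> W - Al j)"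
    and KAok: "\<And>j. j < k \<Longrightarrow> s j \<Longrightarrow> contr W (KA j) \<and> loc W (Al j) (KA j)"
    and KBok: "\<And>j. j < k \<Longrightarrow> \<not> s j \<Longrightarrow> contr W (KB j) \<and> loc W (W - Al j) (KB j)"
  shows "j \<le> k \<Longrightarrow> Al j \<subseteq> W \<and>
    (\<forall>t\<in>Iset T j. contr W (Xop W s T KA j t) \<and> loc W (Al j) (Xop W s T KA j t)
                 \<and> contr W (Yop W s T KB j t) \<and> loc W (W - Al j) (Yop W s T KB j t)) \<and>
    (\<forall>A. A \<subseteq> W \<longrightarrow> St W s KA KB \<Psi> j A = (\<Sum>t\<in>Iset T j. mv W (Xop W s T KA j t) (mv W (Yop W s T KB j t) \<Psi>) A))"
proof (induction j)
  case 0
  show ?case using Al0 fW by (simp add: contr_idm loc_idm mv_idm)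
next
  case (Suc j)
  then have jk: "j < k" by simp
  from Suc.IH jk have AlW: "Al j \<subseteq> W"
    and IHop: "\<And>t. t \<in> Iset T j \<Longrightarrow> contr W (Xop W s T KA j t) \<and> loc W (Al j) (Xop W s T KA j t)
                 \<and> contr W (Yop W s T KB j t) \<and> loc W (W - Al j) (Yop W s T KB j t)"
    and IHst: "\<And>A. A \<subseteq> W \<Longrightarrow> St W s KA KB \<Psi> j A = (\<Sum>t\<in>Iset T j. mv W (Xop W s T KA j t) (mv W (Yop W s T KB j t) \<Psi>) A)"
    by auto
  let ?X = "Xop W s T KA j" and ?Y = "Yop W s T KB j"
  let ?A1 = "Al (Suc j)"
  have TW: "T j \<subseteq> W" using Tsub[OF jk] AlW by (auto split: if_splits)
  have fT: "finite (T j)" using TW fW finite_subset by blast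
  have A1W: "?A1 \<subseteq> W" using Alstep[OF jk] AlW TW by auto
  have stsum: "St W s KA KB \<Psi> (Suc j) A = (\<Sum>r\<in>Iset T j. mv W (if s j then KA j else KB j) (mv W (?X r) (mv W (?Y r) \<Psi>)) A)"
    if "A \<subseteq> W" for A
  proof -
    have "St W s KA KB \<Psi> (Suc j) A = mv W (if s j then KA j else KB j) (\<lambda>B. \<Sum>r\<in>Iset T j. mv W (?X r) (mv W (?Y r) \<Psi>) B) A"
      using IHst by (simp add: mv_cong[of W _ _ "St W s KA KB \<Psi> j" "\<lambda>B. \<Sum>r\<in>Iset T j. mv W (?X r) (mv W (?Y r) \<Psi>) B"])
    then show ?thesis by (simp add: mv_sum)
  qed
  show ?case
  proof (cases "s j")
    case True
    have A1: "?A1 = Al j - T j" using Alstep[OF jk] True by simp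
    have TA: "T j \<subseteq> Al j" using Tsub[OF jk] True by simp
    have ops: "contr W (Xop W s T KA (Suc j) t) \<and> loc W ?A1 (Xop W s T KA (Suc j) t)
                 \<and> contr W (Yop W s T KB (Suc j) t) \<and> loc W (W - ?A1) (Yop W s T KB (Suc j) t)"
      if "t \<in> Iset T (Suc j)" for t
    proof -
      obtain r \<sigma> \<tau> where t: "t = r @ [(\<sigma>, \<tau>)]" and r: "r \<in> Iset T j" and st: "\<sigma> \<subseteq> T j" "\<tau> \<subseteq> T j"
        using \<open>t \<in> Iset T (Suc j)\<close> by auto
      have ir: "contr W (?X r)" "loc W (Al j) (?X r)" "contr W (?Y r)" "loc W (W - Al j) (?Y r)"
        using IHop[OF r] by auto
      have l1: "loc W (Al j) (mm W (KA j) (?X r))"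
        using loc_mm[OF fW AlW] KAok[OF jk True] ir by blast
      have e1: "Al j = ?A1 \<union> T j" using A1 TA by auto
      have l2: "loc W ?A1 (Cmat (T j) \<sigma> \<tau> (mm W (KA j) (?X r)))"
        by (rule loc_C[of _ "T j"]) (use A1 TW st l1 e1 in auto)
      have c2: "contr W (Cmat (T j) \<sigma> \<tau> (mm W (KA j) (?X r)))"
        using contr_C[OF fW TW st contr_mm[OF fW _ ir(1)]] KAok[OF jk True] by blast
      have l3: "loc W (W - ?A1) (mm W (Emat (T j) \<sigma> \<tau>) (?Y r))"
      proof (rule loc_mm[OF fW])
        show "W - ?A1 \<subseteq> W" by auto
        show "loc W (W - ?A1) (Emat (T j) \<sigma> \<tau>)" by (rule loc_mono[OF _ loc_E]) (use A1 TW in auto)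
        show "loc W (W - ?A1) (?Y r)" by (rule loc_mono[OF _ ir(4)]) (use A1 in auto)
      qed
      have c3: "contr W (mm W (Emat (T j) \<sigma> \<tau>) (?Y r))"
        by (rule contr_mm[OF fW contr_E[OF fW TW st] ir(3)])
      show ?thesis using t True l2 c2 l3 c3 by simp
    qed
    have stA: "St W s KA KB \<Psi> (Suc j) A = (\<Sum>t\<in>Iset T (Suc j). mv W (Xop W s T KA (Suc j) t) (mv W (Yop W s T KB (Suc j) t) \<Psi>) A)"
      if AW: "A \<subseteq> W" for A
    proof -
      have "St W s KA KB \<Psi> (Suc j) A = (\<Sum>r\<in>Iset T j. mv W (mm W (KA j) (?X r)) (mv W (?Y r) \<Psi>) A)"
        using stsum[OF AW] True by (simp add: mv_mm[OF fW])
      also have "\<dots> = (\<Sum>r\<in>Iset T j. \<Sum>p\<in>Pow (T j) \<times> Pow (T j).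
            mv W (Cmat (T j) (fst p) (snd p) (mm W (KA j) (?X r))) (mv W (Emat (T j) (fst p) (snd p)) (mv W (?Y r) \<Psi>)) A)"
        by (intro sum.cong refl decomp[OF fW TW])
      also have "\<dots> = (\<Sum>r\<in>Iset T j. \<Sum>p\<in>Pow (T j) \<times> Pow (T j).
            mv W (Xop W s T KA (Suc j) (r @ [p])) (mv W (Yop W s T KB (Suc j) (r @ [p])) \<Psi>) A)"
        using True by (simp add: mv_mm[OF fW])
      also have "\<dots> = (\<Sum>t\<in>Iset T (Suc j). mv W (Xop W s T KA (Suc j) t) (mv W (Yop W s T KB (Suc j) t) \<Psi>) A)"
        by (rule Iset_sum[symmetric])
      finally show ?thesis .
    qed
    show ?thesis using A1W ops stA by blast
  next
    case False
    have A1: "?A1 = Al j \<union> T j" using Alstep[OF jk] False by simp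
    have TA: "T j \<subseteq> W - Al j" using Tsub[OF jk] False by simp
    have ops: "contr W (Xop W s T KA (Suc j) t) \<and> loc W ?A1 (Xop W s T KA (Suc j) t)
                 \<and> contr W (Yop W s T KB (Suc j) t) \<and> loc W (W - ?A1) (Yop W s T KB (Suc j) t)"
      if "t \<in> Iset T (Suc j)" for t
    proof -
      obtain r \<sigma> \<tau> where t: "t = r @ [(\<sigma>, \<tau>)]" and r: "r \<in> Iset T j" and st: "\<sigma> \<subseteq> T j" "\<tau> \<subseteq> T j"
        using \<open>t \<in> Iset T (Suc j)\<close> by auto
      have ir: "contr W (?X r)" "loc W (Al j) (?X r)" "contr W (?Y r)" "loc W (W - Al j) (?Y r)"
        using IHop[OF r] by auto
      have l1: "loc W (W - Al j) (mm W (KB j) (?Y r))"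
        using loc_mm[OF fW _] KBok[OF jk False] ir by blast
      have e1: "W - Al j = (W - ?A1) \<union> T j" using A1 TA by auto
      have l2: "loc W (W - ?A1) (Cmat (T j) \<sigma> \<tau> (mm W (KB j) (?Y r)))"
        by (rule loc_C[of _ "T j"]) (use A1 TW st l1 e1 in auto)
      have c2: "contr W (Cmat (T j) \<sigma> \<tau> (mm W (KB j) (?Y r)))"
        using contr_C[OF fW TW st contr_mm[OF fW _ ir(3)]] KBok[OF jk False] by blast
      have l3: "loc W ?A1 (mm W (?X r) (Emat (T j) \<sigma> \<tau>))"
      proof (rule loc_mm[OF fW A1W])
        show "loc W ?A1 (Emat (T j) \<sigma> \<tau>)" by (rule loc_mono[OF _ loc_E]) (use A1 in auto)
        show "loc W ?A1 (?X r)" by (rule loc_mono[OF _ ir(2)]) (use A1 in auto)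
      qed
      have c3: "contr W (mm W (?X r) (Emat (T j) \<sigma> \<tau>))"
        by (rule contr_mm[OF fW ir(1) contr_E[OF fW TW st]])
      show ?thesis using t False l2 c2 l3 c3 by simp
    qed
    have stA: "St W s KA KB \<Psi> (Suc j) A = (\<Sum>t\<in>Iset T (Suc j). mv W (Xop W s T KA (Suc j) t) (mv W (Yop W s T KB (Suc j) t) \<Psi>) A)"
      if AW: "A \<subseteq> W" for A
    proof -
      let ?Z = "\<lambda>r. mm W (KB j) (?Y r)"
      have "St W s KA KB \<Psi> (Suc j) A = (\<Sum>r\<in>Iset T j. mv W (?X r) (mv W (?Z r) \<Psi>) A)"
      proof -
        have "mv W (KB j) (mv W (?X r) (mv W (?Y r) \<Psi>)) = mv W (?X r) (mv W (?Z r) \<Psi>)" if "r \<in> Iset T j" for r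
          using loc_commute[OF fW AlW, of "?X r" "KB j" "mv W (?Y r) \<Psi>"] IHop[OF that] KBok[OF jk False]
          by (simp add: mv_mm[OF fW])
        then show ?thesis using stsum[OF AW] False by simp
      qed
      also have "\<dots> = (\<Sum>r\<in>Iset T j. \<Sum>p\<in>Pow (T j) \<times> Pow (T j).
            mv W (?X r) (mv W (Cmat (T j) (fst p) (snd p) (?Z r)) (mv W (Emat (T j) (fst p) (snd p)) \<Psi>)) A)"
      proof (intro sum.cong refl)
        fix r
        have "mv W (?Z r) \<Psi> = (\<lambda>B. \<Sum>p\<in>Pow (T j) \<times> Pow (T j). mv W (Cmat (T j) (fst p) (snd p) (?Z r)) (mv W (Emat (T j) (fst p) (snd p)) \<Psi>) B)"
          by (rule ext, rule decomp[OF fW TW])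
        then show "mv W (?X r) (mv W (?Z r) \<Psi>) A = (\<Sum>p\<in>Pow (T j) \<times> Pow (T j).
            mv W (?X r) (mv W (Cmat (T j) (fst p) (snd p) (?Z r)) (mv W (Emat (T j) (fst p) (snd p)) \<Psi>)) A)"
          by (simp add: mv_sum)
      qed
      also have "\<dots> = (\<Sum>r\<in>Iset T j. \<Sum>p\<in>Pow (T j) \<times> Pow (T j).
            mv W (Xop W s T KA (Suc j) (r @ [p])) (mv W (Yop W s T KB (Suc j) (r @ [p])) \<Psi>) A)"
      proof (intro sum.cong refl)
        fix r p assume r: "r \<in> Iset T j" and p: "p \<in> Pow (T j) \<times> Pow (T j)"
        have lC: "loc W (W - ?A1) (Cmat (T j) (fst p) (snd p) (?Z r))"
          using ops[of "r @ [p]"] r p False by (force simp: image_iff)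
        have lE: "loc W ?A1 (Emat (T j) (fst p) (snd p))" by (rule loc_mono[OF _ loc_E]) (use A1 in auto)
        have "mv W (Emat (T j) (fst p) (snd p)) (mv W (Cmat (T j) (fst p) (snd p) (?Z r)) \<Psi>)
            = mv W (Cmat (T j) (fst p) (snd p) (?Z r)) (mv W (Emat (T j) (fst p) (snd p)) \<Psi>)"
          by (rule loc_commute[OF fW A1W lE lC])
        then show "mv W (?X r) (mv W (Cmat (T j) (fst p) (snd p) (?Z r)) (mv W (Emat (T j) (fst p) (snd p)) \<Psi>)) A
          = mv W (Xop W s T KA (Suc j) (r @ [p])) (mv W (Yop W s T KB (Suc j) (r @ [p])) \<Psi>) A"
          using False by (simp add: mv_mm[OF fW])
      qed
      also have "\<dots> = (\<Sum>t\<in>Iset T (Suc j). mv W (Xop W s T KA (Suc j) t) (mv W (Yop W s T KB (Suc j) t) \<Psi>) A)"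
        by (rule Iset_sum[symmetric])
      finally show ?thesis .
    qed
    show ?thesis using A1W ops stA by blast
  qed
qed

lemma ip_sum: "ip W (\<lambda>A. \<Sum>t\<in>I. w t A) (\<lambda>A. \<Sum>t'\<in>I'. w' t' A) = (\<Sum>t\<in>I. \<Sum>t'\<in>I'. ip W (w t) (w' t'))"
proof -
  have "ip W (\<lambda>A. \<Sum>t\<in>I. w t A) (\<lambda>A. \<Sum>t'\<in>I'. w' t' A) = (\<Sum>A\<in>Pow W. \<Sum>t\<in>I. \<Sum>t'\<in>I'. cnj (w t A) * w' t' A)"
    by (simp add: ip_def sum_product)
  also have "\<dots> = (\<Sum>t\<in>I. \<Sum>A\<in>Pow W. \<Sum>t'\<in>I'. cnj (w t A) * w' t' A)" by (rule sum.swap)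
  also have "\<dots> = (\<Sum>t\<in>I. \<Sum>t'\<in>I'. \<Sum>A\<in>Pow W. cnj (w t A) * w' t' A)" by (intro sum.cong refl sum.swap)
  finally show ?thesis by (simp add: ip_def)
qed

lemma final_form:
  assumes fW: "finite W" and SW: "S \<subseteq> W"
    and ops: "\<And>t. t \<in> I \<Longrightarrow> loc W S (X t) \<and> loc W (W - S) (Y t)"
  shows "nrm2 W (\<lambda>A. \<Sum>t\<in>I. mv W (X t) (mv W (Y t) \<Psi>) A)
     = (\<Sum>t\<in>I. \<Sum>t'\<in>I. Re (ip W (mv W (adj (Y t')) (mv W (Y t) \<Psi>)) (mv W (adj (X t)) (mv W (X t') \<Psi>))))"
proof -
  have trm: "ip W (mv W (X t) (mv W (Y t) \<Psi>)) (mv W (X t') (mv W (Y t') \<Psi>))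
      = ip W (mv W (adj (Y t')) (mv W (Y t) \<Psi>)) (mv W (adj (X t)) (mv W (X t') \<Psi>))"
    if tt: "t \<in> I" "t' \<in> I" for t t'
  proof -
    have l: "loc W S (X t')" "loc W (W - S) (Y t')" "loc W S (adj (X t))"
      using ops[OF tt(1)] ops[OF tt(2)] loc_adj by auto
    have e1: "mv W (X t') (mv W (Y t') \<Psi>) = mv W (Y t') (mv W (X t') \<Psi>)"
      by (rule loc_commute[OF fW SW l(1,2)])
    have e2: "mv W (adj (X t)) (mv W (Y t') (mv W (X t') \<Psi>)) = mv W (Y t') (mv W (adj (X t)) (mv W (X t') \<Psi>))"
      by (rule loc_commute[OF fW SW l(3,2)])
    have "ip W (mv W (X t) (mv W (Y t) \<Psi>)) (mv W (X t') (mv W (Y t') \<Psi>))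
        = ip W (mv W (Y t) \<Psi>) (mv W (adj (X t)) (mv W (X t') (mv W (Y t') \<Psi>)))"
      by (rule ip_adj[OF fW])
    also have "\<dots> = ip W (mv W (Y t) \<Psi>) (mv W (Y t') (mv W (adj (X t)) (mv W (X t') \<Psi>)))"
      by (simp only: e1 e2)
    also have "\<dots> = ip W (mv W (adj (Y t')) (mv W (Y t) \<Psi>)) (mv W (adj (X t)) (mv W (X t') \<Psi>))"
      using ip_adj[OF fW, of "adj (Y t')"] by simp
    finally show ?thesis .
  qed
  have "nrm2 W (\<lambda>A. \<Sum>t\<in>I. mv W (X t) (mv W (Y t) \<Psi>) A)
      = Re (\<Sum>t\<in>I. \<Sum>t'\<in>I. ip W (mv W (X t) (mv W (Y t) \<Psi>)) (mv W (X t') (mv W (Y t') \<Psi>)))"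
    by (simp add: nrm2_ip ip_sum)
  also have "\<dots> = Re (\<Sum>t\<in>I. \<Sum>t'\<in>I. ip W (mv W (adj (Y t')) (mv W (Y t) \<Psi>)) (mv W (adj (X t)) (mv W (X t') \<Psi>)))"
    by (intro arg_cong[where f = Re] sum.cong refl trm)
  finally show ?thesis by (simp add: Re_sum)
qed

lemma Re_ip: "Re (ip W U V) = (\<Sum>A\<in>Pow W. Re (U A) * Re (V A) + Im (U A) * Im (V A))"
  by (simp add: ip_def Re_sum)

lemma nrm2_ReIm: "nrm2 W U = (\<Sum>A\<in>Pow W. (Re (U A))\<^sup>2 + (Im (U A))\<^sup>2)"
  by (simp add: nrm2_def cmod_power2)

lemma sum_bool: "(\<Sum>b\<in>(UNIV::bool set). g b) = g True + g False"
  by (simp add: UNIV_bool add.commute)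

lemma realize:
  fixes a :: "'x \<Rightarrow> 'j \<Rightarrow> real" and b :: "'y \<Rightarrow> 'j \<Rightarrow> real"
  assumes fJ: "finite J" and K0: "K \<ge> 0"
    and na: "\<And>x. x \<in> X \<Longrightarrow> (\<Sum>j\<in>J. (a x j)\<^sup>2) \<le> K"
    and nb: "\<And>y. y \<in> Y \<Longrightarrow> (\<Sum>j\<in>J. (b y j)\<^sup>2) \<le> K"
    and ab1: "\<And>x y. x \<in> X \<Longrightarrow> y \<in> Y \<Longrightarrow> f x y \<Longrightarrow> (\<Sum>j\<in>J. a x j * b y j) \<ge> 2/3"
    and ab0: "\<And>x y. x \<in> X \<Longrightarrow> y \<in> Y \<Longrightarrow> \<not> f x y \<Longrightarrow> (\<Sum>j\<in>J. a x j * b y j) \<le> 1/3"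
  shows "realizes_with_margin X Y f (1 / (6 * K + 3))"
proof -
  obtain h where h: "bij_betw h {0..<card J} J" using ex_bij_betw_nat_finite[OF fJ] by blast
  define n where "n = card J"
  define R where "R = K + 1/2"
  have R0: "R > 0" using K0 by (simp add: R_def)
  define c where "c = 1 / sqrt R"
  have c2: "c * c = 1 / R" using R0 by (simp add: c_def real_sqrt_mult[symmetric])
  define al0 where "al0 x i = (if i < n then a x (h i) else if i = n then sqrt (1/2) else if i = Suc n then sqrt (K - (\<Sum>j\<in>J. (a x j)\<^sup>2)) else 0)" for x i
  define be0 where "be0 y i = (if i < n then - b y (h i) else if i = n then sqrt (1/2) else if i = Suc n then 0 else sqrt (K - (\<Sum>j\<in>J. (b y j)\<^sup>2)))" for y i
  have reidx: "(\<Sum>i<n. g (h i)) = (\<Sum>j\<in>J. g j)" for g :: "'j \<Rightarrow> real"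
    using sum.reindex_bij_betw[OF h, of g] by (simp add: n_def atLeast0LessThan)
  have split3: "(\<Sum>i<n + 3. g i) = (\<Sum>i<n. g i) + g n + g (Suc n) + g (Suc (Suc n))" for g :: "nat \<Rightarrow> real"
    by (simp add: numeral_3_eq_3)
  have la: "(\<Sum>i<n + 3. (al0 x i)\<^sup>2) = R" if "x \<in> X" for x
  proof -
    have "(\<Sum>i<n. (al0 x i)\<^sup>2) = (\<Sum>j\<in>J. (a x j)\<^sup>2)"
      using reidx[of "\<lambda>j. (a x j)\<^sup>2"] by (simp add: al0_def)
    then show ?thesis using na[OF that] by (simp add: split3 al0_def R_def)
  qed
  have lb: "(\<Sum>i<n + 3. (be0 y i)\<^sup>2) = R" if "y \<in> Y" for y
  proof -
    have "(\<Sum>i<n. (be0 y i)\<^sup>2) = (\<Sum>j\<in>J. (b y j)\<^sup>2)"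
      using reidx[of "\<lambda>j. (b y j)\<^sup>2"] by (simp add: be0_def)
    then show ?thesis using nb[OF that] by (simp add: split3 be0_def R_def)
  qed
  have lab: "(\<Sum>i<n + 3. al0 x i * be0 y i) = 1/2 - (\<Sum>j\<in>J. a x j * b y j)" for x y
  proof -
    have "(\<Sum>i<n. al0 x i * be0 y i) = - (\<Sum>j\<in>J. a x j * b y j)"
      using reidx[of "\<lambda>j. - (a x j * b y j)"] by (simp add: al0_def be0_def sum_negf)
    then show ?thesis by (simp add: split3 al0_def be0_def)
  qed
  show ?thesis unfolding realizes_with_margin_def
  proof (intro conjI exI[of _ "n + 3"] exI[of _ "\<lambda>x i. c * al0 x i"] exI[of _ "\<lambda>y i. c * be0 y i"] ballI)
    show "0 < 1 / (6 * K + 3)" using K0 by simp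
    fix x assume "x \<in> X"
    have "(\<Sum>i<n + 3. (c * al0 x i)\<^sup>2) = (c * c) * (\<Sum>i<n + 3. (al0 x i)\<^sup>2)"
      by (simp add: sum_distrib_left power2_eq_square mult_ac)
    then show "(\<Sum>i<n + 3. (c * al0 x i)\<^sup>2) = 1"
      using la[OF \<open>x \<in> X\<close>] R0 c2 by simp
  next
    fix y assume "y \<in> Y"
    have "(\<Sum>i<n + 3. (c * be0 y i)\<^sup>2) = (c * c) * (\<Sum>i<n + 3. (be0 y i)\<^sup>2)"
      by (simp add: sum_distrib_left power2_eq_square mult_ac)
    then show "(\<Sum>i<n + 3. (c * be0 y i)\<^sup>2) = 1"
      using lb[OF \<open>y \<in> Y\<close>] R0 c2 by simp
  next
    fix x y assume xy: "x \<in> X" "y \<in> Y"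
    have e: "(\<Sum>i<n + 3. c * al0 x i * (c * be0 y i)) = (1/2 - (\<Sum>j\<in>J. a x j * b y j)) / R"
    proof -
      have "(\<Sum>i<n + 3. c * al0 x i * (c * be0 y i)) = (c * c) * (\<Sum>i<n + 3. al0 x i * be0 y i)"
        by (simp add: sum_distrib_left mult_ac)
      then show ?thesis using c2 lab by simp
    qed
    have R6: "1 / (6 * K + 3) = (1/6) / R" by (simp add: R_def field_simps)
    let ?s = "\<Sum>j\<in>J. a x j * b y j"
    have h1: "\<not> f x y \<Longrightarrow> (1/6) / R \<le> (1/2 - ?s) / R"
      by (intro divide_right_mono) (use ab0[OF xy] R0 in auto)
    have h2: "f x y \<Longrightarrow> (1/2 - ?s) / R \<le> (-1/6) / R"
      by (intro divide_right_mono) (use ab1[OF xy] R0 in auto)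
    have h3: "(-1/6) / R = - ((1/6) / R)" by simp
    show "\<not> f x y \<longrightarrow> 1 / (6 * K + 3) \<le> (\<Sum>i<n + 3. c * al0 x i * (c * be0 y i))"
      unfolding e R6 using h1 by auto
    show "f x y \<longrightarrow> (\<Sum>i<n + 3. c * al0 x i * (c * be0 y i)) \<le> - (1 / (6 * K + 3))"
      unfolding e R6 using h2 h3 by auto
  qed
qed

lemma margin_le1:
  assumes "X \<noteq> {}" "Y \<noteq> {}" "realizes_with_margin X Y f g" shows "g \<le> 1"
proof -
  obtain x y where xy: "x \<in> X" "y \<in> Y" using assms by blast
  obtain d \<alpha> \<beta> where n: "\<forall>x\<in>X. (\<Sum>i<(d::nat). (\<alpha> x i)\<^sup>2) = 1" "\<forall>y\<in>Y. (\<Sum>i<d. (\<beta> y i)\<^sup>2) = (1::real)"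
    and m: "\<forall>x\<in>X. \<forall>y\<in>Y. (\<not> f x y \<longrightarrow> (\<Sum>i<d. \<alpha> x i * \<beta> y i) \<ge> g) \<and> (f x y \<longrightarrow> (\<Sum>i<d. \<alpha> x i * \<beta> y i) \<le> - g)"
    using assms(3) unfolding realizes_with_margin_def by blast
  have "(\<Sum>i<d. \<alpha> x i * \<beta> y i)\<^sup>2 \<le> 1" using Cauchy_Schwarz_ineq_sum[of "\<alpha> x" "\<beta> y" "{..<d}"] n xy by simp
  then have "\<bar>\<Sum>i<d. \<alpha> x i * \<beta> y i\<bar> \<le> 1" using abs_square_le_1 by blast
  moreover have "(\<not> f x y \<longrightarrow> g \<le> (\<Sum>i<d. \<alpha> x i * \<beta> y i)) \<and> (f x y \<longrightarrow> (\<Sum>i<d. \<alpha> x i * \<beta> y i) \<le> - g)"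
    using m xy by blast
  ultimately show ?thesis by (cases "f x y") (auto simp: abs_le_iff)
qed

lemma gamma_ge:
  assumes "X \<noteq> {}" "Y \<noteq> {}" "realizes_with_margin X Y f g" shows "g \<le> margin_gamma X Y f"
proof -
  have "bdd_above {g. realizes_with_margin X Y f g}"
  proof (rule bdd_aboveI)
    fix z assume "z \<in> {g. realizes_with_margin X Y f g}"
    then show "z \<le> 1" using margin_le1[OF assms(1,2)] by simp
  qed
  then show ?thesis unfolding margin_gamma_def by (rule cSup_upper[rotated]) (use assms in simp)
qed

lemma meas_form:
  assumes fW: "finite W" and SW: "S \<subseteq> W"
    and st: "\<And>A. A \<subseteq> W \<Longrightarrow> V A = (\<Sum>t\<in>I. mv W (X t) (mv W (Y t) \<Psi>) A)"
    and ops: "\<And>t. t \<in> I \<Longrightarrow> loc W S (X t) \<and> loc W (W - S) (Y t)"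
    and lP: "\<not> p \<Longrightarrow> loc W (W - S) P"
  shows "mv W P V A = (\<Sum>t\<in>I. mv W (if p then mm W P (X t) else X t) (mv W (if p then Y t else mm W P (Y t)) \<Psi>) A)"
proof -
  have "mv W P V A = mv W P (\<lambda>B. \<Sum>t\<in>I. mv W (X t) (mv W (Y t) \<Psi>) B) A"
    using st by (simp add: mv_cong[of W P P V "\<lambda>B. \<Sum>t\<in>I. mv W (X t) (mv W (Y t) \<Psi>) B"])
  also have "\<dots> = (\<Sum>t\<in>I. mv W P (mv W (X t) (mv W (Y t) \<Psi>)) A)" by (rule mv_sum)
  also have "\<dots> = (\<Sum>t\<in>I. mv W (if p then mm W P (X t) else X t) (mv W (if p then Y t else mm W P (Y t)) \<Psi>) A)"
  proof (intro sum.cong refl)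
    fix t assume t: "t \<in> I"
    show "mv W P (mv W (X t) (mv W (Y t) \<Psi>)) A = mv W (if p then mm W P (X t) else X t) (mv W (if p then Y t else mm W P (Y t)) \<Psi>) A"
    proof (cases p)
      case True then show ?thesis by (simp add: mv_mm[OF fW])
    next
      case False
      have "mv W (X t) (mv W P (mv W (Y t) \<Psi>)) = mv W P (mv W (X t) (mv W (Y t) \<Psi>))"
        using loc_commute[OF fW SW] ops[OF t] lP[OF False] by blast
      then show ?thesis using False by (simp add: mv_mm[OF fW])
    qed
  qed
  finally show ?thesis .
qed

lemma run_St: "tv N (run_state (2^N) \<psi> (\<lambda>j. if s j then UA j x else UB j y) j)
   = St {..<N} s (\<lambda>j. tm N (UA j x)) (\<lambda>j. tm N (UB j y)) (tv N \<psi>) j"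
proof (induction j)
  case (Suc j)
  then show ?case by (cases "s j") (simp_all add: tv_apply)
qed simp

lemma sum_J:
  fixes g :: "_ \<Rightarrow> real"
  shows "(\<Sum>q\<in>(I \<times> I) \<times> Pow W \<times> (UNIV :: bool set). g q)
   = (\<Sum>t\<in>I. \<Sum>t'\<in>I. \<Sum>A\<in>Pow W. g ((t, t'), A, True) + g ((t, t'), A, False))"
proof -
  have e1: "(\<Sum>q\<in>(I \<times> I) \<times> Pow W \<times> (UNIV :: bool set). g q) = (\<Sum>tt\<in>I \<times> I. \<Sum>q\<in>Pow W \<times> (UNIV :: bool set). g (tt, q))"
    by (simp add: sum.cartesian_product)
  have e2: "(\<Sum>q\<in>Pow W \<times> (UNIV :: bool set). g (tt, q)) = (\<Sum>A\<in>Pow W. g (tt, A, True) + g (tt, A, False))" for tt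
  proof -
    have "(\<Sum>q\<in>Pow W \<times> (UNIV :: bool set). g (tt, q)) = (\<Sum>A\<in>Pow W. \<Sum>b\<in>(UNIV :: bool set). g (tt, A, b))"
      by (simp add: sum.cartesian_product)
    then show ?thesis by (simp add: sum_bool)
  qed
  have e3: "(\<Sum>tt\<in>I \<times> I. h tt) = (\<Sum>t\<in>I. \<Sum>t'\<in>I. h (t, t'))" for h :: "_ \<Rightarrow> real"
    by (simp add: sum.cartesian_product)
  show ?thesis unfolding e1 e2 e3 ..
qed

lemma contr2: "contr W K \<Longrightarrow> contr W L \<Longrightarrow> nrm2 W V = 1 \<Longrightarrow> nrm2 W (mv W K (mv W L V)) \<le> 1"
proof -
  assume a: "contr W K" "contr W L" "nrm2 W V = 1"
  have "nrm2 W (mv W K (mv W L V)) \<le> nrm2 W (mv W L V)" using a(1) unfolding contr_def by blast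
  moreover have "nrm2 W (mv W L V) \<le> nrm2 W V" using a(2) unfolding contr_def by blast
  ultimately show ?thesis using a(3) by linarith
qed

lemma protocol_margin:
  assumes qp: "qprotocol X Y f N k \<psi> A0 s T UA UB p PA PB" and XY: "X \<noteq> {}" "Y \<noteq> {}"
  shows "realizes_with_margin X Y f (1 / (6 * 16 ^ qprotocol_cost k T + 3))"
proof -
  define W where "W = {..<N}"
  define Al where "Al = alice_qubits A0 s T"
  define I where "I = Iset T k"
  define c where "c = qprotocol_cost k T"
  define \<Psi> where "\<Psi> = tv N \<psi>"
  have fW: "finite W" by (simp add: W_def)
  have A0: "A0 \<subseteq> W" and psi1: "sqnorm (2^N) \<psi> = 1"
    using qp unfolding qprotocol_def Let_def W_def by auto
  have rounds: "\<And>j. j < k \<Longrightarrow> (if s j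
          then T j \<subseteq> Al j \<and> (\<forall>x\<in>X. is_unitary (2^N) (UA j x) \<and> local_op N (Al j) (UA j x))
          else T j \<subseteq> {..<N} - Al j \<and>
               (\<forall>y\<in>Y. is_unitary (2^N) (UB j y) \<and> local_op N ({..<N} - Al j) (UB j y)))"
    using qp unfolding qprotocol_def Let_def Al_def by blast
  have meas: "if p then (\<forall>x\<in>X. is_projector (2^N) (PA x) \<and> local_op N (Al k) (PA x))
        else (\<forall>y\<in>Y. is_projector (2^N) (PB y) \<and> local_op N ({..<N} - Al k) (PB y))"
    using qp unfolding qprotocol_def Let_def Al_def by blast
  have corr: "\<And>x y. x \<in> X \<Longrightarrow> y \<in> Y \<Longrightarrow>
     (f x y \<longrightarrow> sqnorm (2^N) (apply_op (2^N) (if p then PA x else PB y) (run_state (2^N) \<psi> (\<lambda>j. if s j then UA j x else UB j y) k)) \<ge> 2/3) \<and>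
     (\<not> f x y \<longrightarrow> sqnorm (2^N) (apply_op (2^N) (if p then PA x else PB y) (run_state (2^N) \<psi> (\<lambda>j. if s j then UA j x else UB j y) k)) \<le> 1/3)"
    using qp unfolding qprotocol_def Let_def by blast
  have Psi1: "nrm2 W \<Psi> = 1" using psi1 by (simp add: tv_sqnorm W_def \<Psi>_def)
  define KA where "KA x = (\<lambda>j. tm N (UA j x))" for x
  define KB where "KB y = (\<lambda>j. tm N (UB j y))" for y
  have inv: "Al k \<subseteq> W \<and>
    (\<forall>t\<in>I. contr W (Xop W s T (KA x) k t) \<and> loc W (Al k) (Xop W s T (KA x) k t)
                 \<and> contr W (Yop W s T (KB y) k t) \<and> loc W (W - Al k) (Yop W s T (KB y) k t)) \<and>
    (\<forall>A. A \<subseteq> W \<longrightarrow> St W s (KA x) (KB y) \<Psi> k A = (\<Sum>t\<in>I. mv W (Xop W s T (KA x) k t) (mv W (Yop W s T (KB y) k t) \<Psi>) A))"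
    if xy: "x \<in> X" "y \<in> Y" for x y
    unfolding I_def
  proof (rule invariant[OF fW, where Al = Al])
    show "Al 0 \<subseteq> W" using A0 by (simp add: Al_def)
    show "\<And>j. j < k \<Longrightarrow> Al (Suc j) = (if s j then Al j - T j else Al j \<union> T j)" by (simp add: Al_def)
    show "\<And>j. j < k \<Longrightarrow> if s j then T j \<subseteq> Al j else T j \<subseteq> W - Al j"
      using rounds unfolding W_def by (auto split: if_splits)
    show "\<And>j. j < k \<Longrightarrow> s j \<Longrightarrow> contr W (KA x j) \<and> loc W (Al j) (KA x j)"
      using rounds xy unfolding KA_def W_def by (auto intro: unitary_contr local_loc)
    show "\<And>j. j < k \<Longrightarrow> \<not> s j \<Longrightarrow> contr W (KB y j) \<and> loc W (W - Al j) (KB y j)"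
      using rounds xy unfolding KB_def W_def by (auto intro: unitary_contr local_loc)
  qed simp
  obtain x0 y0 where x0: "x0 \<in> X" and y0: "y0 \<in> Y" using XY by blast
  have AlW: "Al k \<subseteq> W" using inv[OF x0 y0] by blast
  have finT: "\<And>i. i < k \<Longrightarrow> finite (T i)"
  proof -
    fix i assume "i < k"
    have "Al j \<subseteq> W" if "j \<le> k" for j
      using that
    proof (induction j)
      case 0 then show ?case using A0 by (simp add: Al_def)
    next
      case (Suc j)
      then have "Al j \<subseteq> W" "j < k" by auto
      then have "T j \<subseteq> W" using rounds[of j] unfolding W_def by (auto split: if_splits)
      moreover have "Al (Suc j) = (if s j then Al j - T j else Al j \<union> T j)" by (simp add: Al_def)
      ultimately show ?case using \<open>Al j \<subseteq> W\<close> by auto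
    qed
    then have "Al i \<subseteq> W" using \<open>i < k\<close> by simp
    then have "T i \<subseteq> W" using rounds[of i] \<open>i < k\<close> unfolding W_def by (auto split: if_splits)
    then show "finite (T i)" using fW finite_subset by blast
  qed
  have fI: "finite I" unfolding I_def using finT by (rule Iset_finite)
  have cardI: "card I \<le> 4 ^ c" unfolding I_def c_def qprotocol_cost_def using finT by (rule Iset_card)
  define XX where "XX x t = (if p then mm W (tm N (PA x)) (Xop W s T (KA x) k t) else Xop W s T (KA x) k t)" for x t
  define YY where "YY y t = (if p then Yop W s T (KB y) k t else mm W (tm N (PB y)) (Yop W s T (KB y) k t))" for y t
  have XXok: "contr W (XX x t) \<and> loc W (Al k) (XX x t)" if "x \<in> X" "t \<in> I" for x t
  proof -
    have b: "contr W (Xop W s T (KA x) k t) \<and> loc W (Al k) (Xop W s T (KA x) k t)" using inv[OF that(1) y0] that(2) by blast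
    show ?thesis
    proof (cases p)
      case True
      then have "contr W (tm N (PA x)) \<and> loc W (Al k) (tm N (PA x))"
        using meas that(1) unfolding W_def by (auto intro: proj_contr local_loc)
      then show ?thesis using True b loc_mm[OF fW AlW] contr_mm[OF fW] by (simp add: XX_def)
    qed (use b in \<open>simp add: XX_def\<close>)
  qed
  have YYok: "contr W (YY y t) \<and> loc W (W - Al k) (YY y t)" if "y \<in> Y" "t \<in> I" for y t
  proof -
    have b: "contr W (Yop W s T (KB y) k t) \<and> loc W (W - Al k) (Yop W s T (KB y) k t)" using inv[OF x0 that(1)] that(2) by blast
    show ?thesis
    proof (cases p)
      case False
      then have "contr W (tm N (PB y)) \<and> loc W (W - Al k) (tm N (PB y))"
        using meas that(1) unfolding W_def by (auto intro: proj_contr local_loc)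
      then show ?thesis using False b loc_mm[OF fW, of "W - Al k"] contr_mm[OF fW] by (simp add: YY_def)
    qed (use b in \<open>simp add: YY_def\<close>)
  qed
  define chx where "chx x t t' = mv W (adj (XX x t)) (mv W (XX x t') \<Psi>)" for x t t'
  define phy where "phy y t t' = mv W (adj (YY y t')) (mv W (YY y t) \<Psi>)" for y t t'
  define J where "J = (I \<times> I) \<times> Pow W \<times> (UNIV :: bool set)"
  define a where "a x q = (case q of ((t, t'), A, b) \<Rightarrow> if b then Re (chx x t t' A) else Im (chx x t t' A))" for x q
  define bb where "bb y q = (case q of ((t, t'), A, b) \<Rightarrow> if b then Re (phy y t t' A) else Im (phy y t t' A))" for y q
  have fJ: "finite J" using fI fW by (simp add: J_def)
  have prob: "sqnorm (2^N) (apply_op (2^N) (if p then PA x else PB y) (run_state (2^N) \<psi> (\<lambda>j. if s j then UA j x else UB j y) k))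
      = (\<Sum>q\<in>J. a x q * bb y q)" if xy: "x \<in> X" "y \<in> Y" for x y
  proof -
    let ?P = "tm N (if p then PA x else PB y)"
    have "sqnorm (2^N) (apply_op (2^N) (if p then PA x else PB y) (run_state (2^N) \<psi> (\<lambda>j. if s j then UA j x else UB j y) k))
        = nrm2 W (mv W ?P (St W s (KA x) (KB y) \<Psi> k))"
      by (simp add: tv_sqnorm tv_apply run_St W_def KA_def KB_def \<Psi>_def)
    also have "mv W ?P (St W s (KA x) (KB y) \<Psi> k) = (\<lambda>A. \<Sum>t\<in>I. mv W (XX x t) (mv W (YY y t) \<Psi>) A)"
    proof (rule ext)
      fix A
      have lP: "\<not> p \<Longrightarrow> loc W (W - Al k) ?P" using meas xy unfolding W_def by (auto intro: local_loc)
      show "mv W ?P (St W s (KA x) (KB y) \<Psi> k) A = (\<Sum>t\<in>I. mv W (XX x t) (mv W (YY y t) \<Psi>) A)"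
        using meas_form[OF fW AlW, where V = "St W s (KA x) (KB y) \<Psi> k" and I = I and X = "Xop W s T (KA x) k" and Y = "Yop W s T (KB y) k" and \<Psi> = \<Psi> and p = p and P = ?P and A = A]
          inv[OF xy] lP by (simp add: XX_def YY_def)
    qed
    also have "nrm2 W (\<lambda>A. \<Sum>t\<in>I. mv W (XX x t) (mv W (YY y t) \<Psi>) A)
        = (\<Sum>t\<in>I. \<Sum>t'\<in>I. Re (ip W (phy y t t') (chx x t t')))"
      unfolding phy_def chx_def by (rule final_form[OF fW AlW]) (use XXok YYok xy in auto)
    also have "\<dots> = (\<Sum>q\<in>J. a x q * bb y q)"
      unfolding J_def sum_J by (simp add: Re_ip a_def bb_def mult.commute)
    finally show ?thesis .
  qed
  have nchi: "(\<Sum>q\<in>J. (a x q)\<^sup>2) \<le> 16 ^ c" if "x \<in> X" for x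
  proof -
    have "(\<Sum>q\<in>J. (a x q)\<^sup>2) = (\<Sum>t\<in>I. \<Sum>t'\<in>I. nrm2 W (chx x t t'))"
      unfolding J_def sum_J by (simp add: nrm2_ReIm a_def)
    also have "\<dots> \<le> (\<Sum>t\<in>I. \<Sum>t'\<in>I. 1)"
    proof (intro sum_mono)
      fix t t' assume "t \<in> I" "t' \<in> I"
      then have "contr W (adj (XX x t))" "contr W (XX x t')" using XXok[OF that] contr_adj[OF fW] by auto
      then show "nrm2 W (chx x t t') \<le> 1" unfolding chx_def using Psi1 by (rule contr2)
    qed
    also have "\<dots> = real (card I) * real (card I)" by simp
    also have "\<dots> \<le> 4 ^ c * 4 ^ c" using cardI by (intro mult_mono) (auto simp flip: of_nat_power)
    also have "\<dots> = 16 ^ c" by (simp add: power_mult_distrib[symmetric])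
    finally show ?thesis .
  qed
  have nphi: "(\<Sum>q\<in>J. (bb y q)\<^sup>2) \<le> 16 ^ c" if "y \<in> Y" for y
  proof -
    have "(\<Sum>q\<in>J. (bb y q)\<^sup>2) = (\<Sum>t\<in>I. \<Sum>t'\<in>I. nrm2 W (phy y t t'))"
      unfolding J_def sum_J by (simp add: nrm2_ReIm bb_def)
    also have "\<dots> \<le> (\<Sum>t\<in>I. \<Sum>t'\<in>I. 1)"
    proof (intro sum_mono)
      fix t t' assume "t \<in> I" "t' \<in> I"
      then have "contr W (adj (YY y t'))" "contr W (YY y t)" using YYok[OF that] contr_adj[OF fW] by auto
      then show "nrm2 W (phy y t t') \<le> 1" unfolding phy_def using Psi1 by (rule contr2)
    qed
    also have "\<dots> = real (card I) * real (card I)" by simp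
    also have "\<dots> \<le> 4 ^ c * 4 ^ c" using cardI by (intro mult_mono) (auto simp flip: of_nat_power)
    also have "\<dots> = 16 ^ c" by (simp add: power_mult_distrib[symmetric])
    finally show ?thesis .
  qed
  have "realizes_with_margin X Y f (1 / (6 * 16 ^ c + 3))"
  proof (rule realize[OF fJ, where a = a and b = bb])
    show "0 \<le> (16::real) ^ c" by simp
  qed (use nchi nphi prob corr in auto)
  then show ?thesis by (simp add: c_def)
qed

lemma local_all: "local_op N {..<N} M"
  unfolding local_op_def
proof (intro exI[of _ "\<lambda>P Q. M (enc N {i. i < N \<and> P i}) (enc N {i. i < N \<and> Q i})"] allI impI)
  fix a b :: nat assume ab: "a < 2^N" "b < 2^N"
  have "{i. i < N \<and> (i \<in> {..<N} \<and> bit a i)} = dec N a" "{i. i < N \<and> (i \<in> {..<N} \<and> bit b i)} = dec N b"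
    by (auto simp: dec_def)
  then show "M a b = (if \<forall>i<N. i \<notin> {..<N} \<longrightarrow> bit a i = bit b i
      then M (enc N {i. i < N \<and> (i \<in> {..<N} \<and> bit a i)}) (enc N {i. i < N \<and> (i \<in> {..<N} \<and> bit b i)}) else 0)"
    using ab by (simp add: enc_dec)
qed

definition ex_e :: "nat \<Rightarrow> bool list \<Rightarrow> nat" where
  "ex_e n x = enc n {i. i < n \<and> x ! i}"
definition ex_sig :: "nat \<Rightarrow> bool list \<Rightarrow> nat \<Rightarrow> nat" where
  "ex_sig n x a = (if a = 0 then ex_e n x else if a = ex_e n x then 0 else a)"
definition ex_dl :: "nat \<Rightarrow> nat \<Rightarrow> bool list" where
  "ex_dl n a = map (\<lambda>i. bit a i) [0..<n]"

lemma ex_e_lt: "ex_e n x < 2^n" unfolding ex_e_def by (rule enc_lt) auto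

lemma ex_dl_e: "length x = n \<Longrightarrow> ex_dl n (ex_e n x) = x"
proof -
  assume l: "length x = n"
  have S: "{i. i < n \<and> x ! i} \<subseteq> {..<n}" by auto
  have "ex_dl n (ex_e n x) = map (\<lambda>i. x ! i) [0..<length x]"
    unfolding ex_dl_def ex_e_def using l bit_enc[OF S] by auto
  then show ?thesis by (simp add: map_nth)
qed

lemma ex_sig_lt: "a < 2^n \<Longrightarrow> ex_sig n x a < 2^n" using ex_e_lt by (simp add: ex_sig_def)
lemma ex_sig_inj: "ex_sig n x a = ex_sig n x c \<longleftrightarrow> a = c" by (auto simp: ex_sig_def split: if_splits)

lemma exists_protocol:
  fixes f :: "bool list \<Rightarrow> bool list \<Rightarrow> bool"
  shows "\<exists>N k \<psi> A0 s T UA UB p PA PB. qprotocol {xs. length xs = n} {ys. length ys = n} f N k \<psi> A0 s T UA UB p PA PB"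
proof -
  define D where "D = (2::nat)^n"
  define \<psi> where "\<psi> = (\<lambda>a::nat. if a = 0 then (1::complex) else 0)"
  define UA where "UA = (\<lambda>(j::nat) x a b. if b = ex_sig n x a then (1::complex) else 0)"
  define PB where "PB = (\<lambda>y a b. if a = b \<and> f (ex_dl n a) y then (1::complex) else 0)"
  have D0: "0 < D" by (simp add: D_def)
  have psi: "sqnorm D \<psi> = 1"
  proof -
    have "sqnorm D \<psi> = (\<Sum>a<D. if a = 0 then 1 else 0)" unfolding sqnorm_def \<psi>_def by (intro sum.cong) auto
    then show ?thesis using D0 by simp
  qed
  have unit: "is_unitary D (UA 0 x)" for x
    unfolding is_unitary_def
  proof (intro allI impI)
    fix a c assume ac: "a < D" "c < D"
    have "(\<Sum>b<D. UA 0 x a b * cnj (UA 0 x c b)) = (\<Sum>b<D. if b = ex_sig n x a then (if ex_sig n x a = ex_sig n x c then 1 else 0) else 0)"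
      unfolding UA_def by (intro sum.cong) auto
    also have "\<dots> = (if ex_sig n x a = ex_sig n x c then 1 else 0)" using ex_sig_lt ac by (simp add: D_def)
    finally show "(\<Sum>b<D. UA 0 x a b * cnj (UA 0 x c b)) = (if a = c then 1 else 0)" by (simp add: ex_sig_inj)
  qed
  have proj: "is_projector D (PB y)" for y
    unfolding is_projector_def
  proof (intro conjI allI impI)
    fix a b assume "a < D" "b < D"
    show "PB y a b = cnj (PB y b a)" by (auto simp: PB_def)
  next
    fix a c assume ac: "a < D" "c < D"
    have "(\<Sum>b<D. PB y a b * PB y b c) = (\<Sum>b<D. if b = a then PB y a c else 0)"
      unfolding PB_def by (intro sum.cong) auto
    then show "(\<Sum>b<D. PB y a b * PB y b c) = PB y a c" using ac by simp
  qed
  have run: "apply_op D (UA 0 x) \<psi> = (\<lambda>a. if a = ex_e n x then 1 else 0)" for x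
  proof (rule ext)
    fix a
    have "apply_op D (UA 0 x) \<psi> a = (\<Sum>b<D. if b = 0 then (if ex_sig n x a = 0 then 1 else 0) else 0)"
      unfolding apply_op_def UA_def \<psi>_def by (intro sum.cong) auto
    also have "\<dots> = (if ex_sig n x a = 0 then 1 else 0)" using D0 by simp
    also have "\<dots> = (if a = ex_e n x then 1 else 0)" by (auto simp: ex_sig_def)
    finally show "apply_op D (UA 0 x) \<psi> a = (if a = ex_e n x then 1 else 0)" .
  qed
  have pr: "sqnorm D (apply_op D (PB y) (\<lambda>a. if a = ex_e n x then 1 else 0)) = (if f x y then 1 else 0)"
    if "length x = n" for x y
  proof -
    have "apply_op D (PB y) (\<lambda>a. if a = ex_e n x then 1 else 0) = (\<lambda>a. if a = ex_e n x \<and> f x y then 1 else 0)"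
    proof (rule ext)
      fix a
      have "apply_op D (PB y) (\<lambda>a. if a = ex_e n x then 1 else 0) a
          = (\<Sum>b<D. if b = ex_e n x then (if a = b \<and> f (ex_dl n a) y then 1 else 0) else 0)"
        unfolding apply_op_def PB_def by (intro sum.cong) auto
      also have "\<dots> = (if a = ex_e n x \<and> f x y then 1 else 0)"
        using ex_e_lt[of n x] ex_dl_e[OF that] by (auto simp: D_def)
      finally show "apply_op D (PB y) (\<lambda>a. if a = ex_e n x then 1 else 0) a = (if a = ex_e n x \<and> f x y then 1 else 0)" .
    qed
    moreover have "sqnorm D (\<lambda>a. if a = ex_e n x \<and> f x y then 1 else 0) = (if f x y then 1 else 0)"
    proof -
      have "sqnorm D (\<lambda>a. if a = ex_e n x \<and> f x y then 1 else 0) = (\<Sum>a<D. if a = ex_e n x then (if f x y then 1 else 0) else 0)"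
        unfolding sqnorm_def by (intro sum.cong) auto
      then show ?thesis using ex_e_lt[of n x] by (simp add: D_def)
    qed
    ultimately show ?thesis by simp
  qed
  have "qprotocol {xs. length xs = n} {ys. length ys = n} f n 1 \<psi> {..<n} (\<lambda>_. True) (\<lambda>_. {..<n}) UA (\<lambda>_ _ _ _. 0) False (\<lambda>_ _ _. 0) PB"
    unfolding qprotocol_def Let_def D_def[symmetric]
  proof (intro conjI)
    show "\<forall>j<1. if True then {..<n} \<subseteq> alice_qubits {..<n} (\<lambda>_. True) (\<lambda>_. {..<n}) j \<and>
        (\<forall>x\<in>{xs. length xs = n}. is_unitary D (UA j x) \<and> local_op n (alice_qubits {..<n} (\<lambda>_. True) (\<lambda>_. {..<n}) j) (UA j x))
      else {..<n} \<subseteq> {..<n} - alice_qubits {..<n} (\<lambda>_. True) (\<lambda>_. {..<n}) j \<and>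
        (\<forall>y\<in>{ys. length ys = n}. is_unitary D (\<lambda>_ _. 0) \<and> local_op n ({..<n} - alice_qubits {..<n} (\<lambda>_. True) (\<lambda>_. {..<n}) j) (\<lambda>_ _. 0))"
      using unit local_all[of n] by simp
    show "if False then \<forall>x\<in>{xs. length xs = n}. is_projector D (\<lambda>_ _. 0) \<and> local_op n (alice_qubits {..<n} (\<lambda>_. True) (\<lambda>_. {..<n}) 1) (\<lambda>_ _. 0)
      else \<forall>y\<in>{ys. length ys = n}. is_projector D (PB y) \<and> local_op n ({..<n} - alice_qubits {..<n} (\<lambda>_. True) (\<lambda>_. {..<n}) 1) (PB y)"
      using proj local_all[of n] by simp
    show "\<forall>x\<in>{xs. length xs = n}. \<forall>y\<in>{ys. length ys = n}.
       (f x y \<longrightarrow> 2 / 3 \<le> sqnorm D (apply_op D (if False then (\<lambda>_ _. 0) else PB y) (run_state D \<psi> (\<lambda>j. if True then UA j x else (\<lambda>_ _. 0)) 1))) \<and>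
       (\<not> f x y \<longrightarrow> sqnorm D (apply_op D (if False then (\<lambda>_ _. 0) else PB y) (run_state D \<psi> (\<lambda>j. if True then UA j x else (\<lambda>_ _. 0)) 1)) \<le> 1 / 3)"
      using run pr by simp
  qed (use psi in auto)
  then show ?thesis by blast
qed

theorem mainTheorem8:
  shows "\<exists>C::real. \<forall>(n::nat) (f :: bool list \<Rightarrow> bool list \<Rightarrow> bool).
           real (Qent {xs. length xs = n} {ys. length ys = n} f)
             \<ge> 1/4 * log 2 (1 / margin_gamma {xs. length xs = n} {ys. length ys = n} f) - C"
proof (intro exI[of _ 1] allI)
  fix n and f :: "bool list \<Rightarrow> bool list \<Rightarrow> bool"
  let ?X = "{xs :: bool list. length xs = n}"
  let ?Q = "Qent ?X ?X f"
  have ne: "?X \<noteq> {}"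
  proof -
    have "replicate n True \<in> ?X" by simp
    then show ?thesis by blast
  qed
  have "\<exists>N k \<psi> A0 s T UA UB p PA PB. qprotocol ?X ?X f N k \<psi> A0 s T UA UB p PA PB \<and> qprotocol_cost k T = ?Q"
    unfolding Qent_def
  proof (rule LeastI_ex)
    obtain N k \<psi> A0 s T UA UB p PA PB where q: "qprotocol ?X ?X f N k \<psi> A0 s T UA UB p PA PB"
      using exists_protocol[of n f] by (elim exE) blast
    show "\<exists>c N k \<psi> A0 s T UA UB p PA PB. qprotocol ?X ?X f N k \<psi> A0 s T UA UB p PA PB \<and> qprotocol_cost k T = c"
      using q by (intro exI conjI) (assumption, rule refl)
  qed
  then obtain N k \<psi> A0 s T UA UB p PA PB where qp: "qprotocol ?X ?X f N k \<psi> A0 s T UA UB p PA PB"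
    and cost: "qprotocol_cost k T = ?Q" by (elim exE conjE) blast
  define g :: real where "g = 1 / (6 * 16 ^ ?Q + 3)"
  have p16: "(0::real) < 16 ^ ?Q" by simp
  have "0 < 6 * (16::real) ^ ?Q + 3" using p16 by linarith
  then have g0: "0 < g" unfolding g_def by simp
  have "realizes_with_margin ?X ?X f g" using protocol_margin[OF qp ne ne] cost by (simp add: g_def)
  then have gle: "g \<le> margin_gamma ?X ?X f" by (rule gamma_ge[OF ne ne])
  have "log 2 (1 / margin_gamma ?X ?X f) \<le> log 2 (1 / g)"
    using g0 gle by (simp add: frac_le)
  also have "1 / g = 6 * 16 ^ ?Q + 3" by (simp add: g_def)
  also have "log 2 (6 * 16 ^ ?Q + 3) \<le> log 2 (2 ^ (4 * ?Q + 4))"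
  proof -
    have "(1::real) \<le> 16 ^ ?Q" by simp
    then have "6 * 16 ^ ?Q + 3 \<le> (16::real) * 16 ^ ?Q" by linarith
    also have "\<dots> = 2 ^ (4 * ?Q + 4)" by (simp add: power_add power_mult)
    finally have le: "6 * 16 ^ ?Q + 3 \<le> (2::real) ^ (4 * ?Q + 4)" .
    have pos: "(0::real) < 6 * 16 ^ ?Q + 3" "(0::real) < 2 ^ (4 * ?Q + 4)" using p16 by (linarith, simp)
    show ?thesis using log_le_cancel_iff[of 2 "6 * 16 ^ ?Q + 3" "2 ^ (4 * ?Q + 4)"] le pos by simp
  qed
  also have "\<dots> = 4 * real ?Q + 4" by simp
  finally show "1/4 * log 2 (1 / margin_gamma ?X ?X f) - 1 \<le> real ?Q" by simp
qed

end
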